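(* Let $\mathsf{k}$ be a field of characteristic zero, $S=\mathsf{k}[x,y,z]$, $R=\mathsf{k}[X,Y,Z]$ with $S$ acting by differentiation. Let $F\in R$ be nonzero homogeneous of even degree $d\ge2$, $A=S/\operatorname{Ann}_S(F)$, and $\ell\in S_1$ with $\ell^2\ne0$ and $\ell^3=0$ in $A$. Set $(r,s,t)=(h_{A^{(2)}}(\frac d2-1),h_{A^{(1)}}(\frac d2-1),h_A(\frac d2))$. Then the Hilbert functions of $A$, $A^{(1)}$, $A^{(2)}$ are determined by $(r,s,t)$ as follows. (1) If $d\ge4$, $r\in[1,\frac d2-1]$, $s\in[2r,\frac d2+r]$ and $t\in[2s-r,\frac d2+s+1]$, then $h_{A^{(2)}}(i)=i+1$ for $0\le i\le r-1$ and $h_{A^{(2)}}(i)=r$ for $r\le i\le \frac d2-1$; $h_{A^{(1)}}(i)=2i+1$ for $0\le i\le r-1$, $h_{A^{(1)}}(i)=i+r+1$ for $r\le i\le s-r-1$, and $h_{A^{(1)}}(i)=s$ for $s-r\le i\le\frac d2-1$. If $t=3r$, then $h_A$ is one of the following two functions on $0\le i\le \frac d2$: (a) $h_A(0)=1$, $h_A(i)=3i$ for $1\le i\le r-1$, $h_A(i)=3r$ for $r\le i\le\frac d2$; or (b) $h_A(0)=1$, $h_A(i)=3i$ for $1\le i\le r-1$, $h_A(r)=3r-1$, $h_A(i)=3r$ for $r+1\le i\le \frac d2$. Otherwise (i.e. $t>3r$): $h_A(0)=1$; $h_A(i)=3i$ for $1\le i\le r$; $h_A(i)=2i+r+1$ for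 $r+1\le i\le s-r-1$; at $i=s-r$, $h_A(i)=2i+r+1$ if $t>2s-r$ and $s>2r$, and $h_A(i)=2i+r$ if $t>2s-r$ and $s=2r$; $h_A(i)=i+s+1$ for $s-r+1\le i\le t-s-1$; and $h_A(i)=t$ for $t-s\le i\le\frac d2$. (2) If $d\ge2$, $r=\frac d2$, $s=d-1$ and $t\in[\frac{3d}{2}-2,\frac{3d}{2}]$, then for every $0\le i\le\frac d2-1$, $h_{A^{(2)}}(i)=i+1$ and $h_{A^{(1)}}(i)=2i+1$, and $h_A(0)=1$, $h_A(i)=3i$ for $1\le i\le\frac d2-1$, $h_A(\frac d2)=t$.
   Context: $x,y,z$ act as $\partial/\partial X,\partial/\partial Y,\partial/\partial Z$; $\operatorname{Ann}_S(G)=\{g\in S:g\circ G=0\}$. $\ell^k=0$ in $A$ means $\ell^k\circ F=0$. $A^{(i)}:=S/\operatorname{Ann}_S(\ell^i\circ F)$ (an Artinian Gorenstein algebra of socle degree $d-i$ when $\ell^i\circ F\neq 0$); $h_B(j)=\dim_{\mathsf{k}}B_j$. Intervals $[a,b]$ denote sets of integers. *)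

theory Defs
  imports Main "HOL.Vector_Spaces" "HOL-Library.Function_Algebras"
begin

text \<open>Polynomials in three variables over a field 'k, represented by their
coefficient functions on exponent triples (a,b,c), i.e. the monomial
x^a y^b z^c (in S) resp. X^a Y^b Z^c (in R).\<close>

type_synonym 'k poly3 = "nat \<times> nat \<times> nat \<Rightarrow> 'k"

fun mdeg :: "nat \<times> nat \<times> nat \<Rightarrow> nat" where
  "mdeg (a, b, c) = a + b + c"

fun madd :: "nat \<times> nat \<times> nat \<Rightarrow> nat \<times> nat \<times> nat \<Rightarrow> nat \<times> nat \<times> nat" where
  "madd (a, b, c) (a', b', c') = (a + a', b + b', c + c')"

definition supp3 :: "'k::zero poly3 \<Rightarrow> (nat \<times> nat \<times> nat) set" where
  "supp3 p = {m. p m \<noteq> 0}"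

definition is_poly3 :: "'k::zero poly3 \<Rightarrow> bool" where
  "is_poly3 p \<longleftrightarrow> finite (supp3 p)"

definition homog :: "nat \<Rightarrow> 'k::zero poly3 \<Rightarrow> bool" where
  "homog j p \<longleftrightarrow> (\<forall>m. p m \<noteq> 0 \<longrightarrow> mdeg m = j)"

definition graded :: "nat \<Rightarrow> 'k::zero poly3 set" where
  "graded j = {p. homog j p}"

definition one3 :: "'k::{zero,one} poly3" where
  "one3 m = (if m = (0, 0, 0) then 1 else 0)"

definition pmul :: "'k::comm_semiring_1 poly3 \<Rightarrow> 'k poly3 \<Rightarrow> 'k poly3" where
  "pmul p q = (\<lambda>g. \<Sum>(\<alpha>, \<beta>) \<in> {(\<alpha>, \<beta>). \<alpha> \<in> supp3 p \<and> \<beta> \<in> supp3 q \<and> madd \<alpha> \<beta> = g}.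
                     p \<alpha> * q \<beta>)"

primrec ppow :: "'k::comm_semiring_1 poly3 \<Rightarrow> nat \<Rightarrow> 'k poly3" where
  "ppow p 0 = one3"
| "ppow p (Suc n) = pmul p (ppow p n)"

text \<open>coefficient of X^\<gamma> in (d/dX)^\<alpha> X^(\<alpha>+\<gamma>) : (\<alpha>+\<gamma>)!/\<gamma>!\<close>
fun dcoef :: "nat \<times> nat \<times> nat \<Rightarrow> nat \<times> nat \<times> nat \<Rightarrow> nat" where
  "dcoef (a, b, c) (u, v, w) =
     (fact (a + u) div fact u) * (fact (b + v) div fact v) * (fact (c + w) div fact w)"

text \<open>g \<circ> G : the action of g \<in> S on G \<in> R by differentiation\<close>
definition act :: "'k::comm_semiring_1 poly3 \<Rightarrow> 'k poly3 \<Rightarrow> 'k poly3" where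
  "act g G = (\<lambda>\<gamma>. \<Sum>\<alpha> \<in> supp3 g. g \<alpha> * G (madd \<alpha> \<gamma>) * of_nat (dcoef \<alpha> \<gamma>))"

definition Ann :: "'k::comm_semiring_1 poly3 \<Rightarrow> 'k poly3 set" where
  "Ann G = {g. is_poly3 g \<and> act g G = 0}"

definition scale3 :: "'k::field \<Rightarrow> 'k poly3 \<Rightarrow> 'k poly3" where
  "scale3 c p = (\<lambda>m. c * p m)"

definition dim3 :: "'k::field poly3 set \<Rightarrow> nat" where
  "dim3 V = vector_space.dim scale3 V"

text \<open>Hilbert function of S/Ann_S(G): h(j) = dim_k (S_j / (Ann_S(G))_j)
  = dim S_j - dim (Ann_S(G) \<inter> S_j).\<close>
definition hilb :: "('k::field) poly3 \<Rightarrow> nat \<Rightarrow> nat" where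
  "hilb G j = dim3 (graded j :: 'k poly3 set) - dim3 (graded j \<inter> Ann G)"

end

theory Submission
  imports Defs
begin

context vector_space begin

definition fdim :: "'b set \<Rightarrow> bool" where
  "fdim V \<longleftrightarrow> (\<exists>A. finite A \<and> V \<subseteq> span A)"

lemma basis_fd:
  assumes "subspace V" "fdim V"
  obtains B where "B \<subseteq> V" "independent B" "span B = V" "finite B" "card B = dim V"
proof -
  obtain A where A: "finite A" "V \<subseteq> span A" using assms(2) fdim_def by auto
  obtain B where B: "B \<subseteq> V" "independent B" "V \<subseteq> span B" "card B = dim V"
    using basis_exists by blast
  have "span B \<subseteq> V" using B(1) assms(1) span_minimal by blast
  moreover have "finite B" using independent_span_bound[OF A(1) B(2)] B(1) A(2) by blast
  ultimately show ?thesis using that B by blast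
qed

lemma fdim_mono: "fdim W \<Longrightarrow> V \<subseteq> W \<Longrightarrow> fdim V"
  unfolding fdim_def by blast

lemma fdim_span: "finite A \<Longrightarrow> fdim (span A)"
  unfolding fdim_def by blast

lemma indep_card_le_dim:
  assumes "subspace W" "fdim W" "B \<subseteq> W" "independent B"
  shows "finite B \<and> card B \<le> dim W"
proof -
  obtain C where C: "C \<subseteq> W" "independent C" "span C = W" "finite C" "card C = dim W"
    using basis_fd[OF assms(1,2)] by blast
  show ?thesis using independent_span_bound[OF C(4) assms(4)] assms(3) C by auto
qed

lemma dim_mono_fd:
  assumes "subspace W" "fdim W" "V \<subseteq> W"
  shows "dim V \<le> dim W"
proof -
  obtain C where C: "C \<subseteq> W" "independent C" "span C = W" "finite C" "card C = dim W"
    using basis_fd[OF assms(1,2)] by blast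
  show ?thesis using dim_le_card[of V C] C assms(3) by auto
qed

lemma dim_lt_fd:
  assumes "subspace W" "fdim W" "subspace V" "V \<subseteq> W" "w \<in> W" "w \<notin> V"
  shows "dim V < dim W"
proof -
  obtain B where B: "B \<subseteq> V" "independent B" "span B = V" "finite B" "card B = dim V"
    using basis_fd[OF assms(3) fdim_mono[OF assms(2,4)]] by blast
  have "independent (insert w B)" using B assms(6) independent_insertI by blast
  moreover have "w \<notin> B" using B assms(6) by blast
  moreover have "insert w B \<subseteq> W" using B assms by blast
  ultimately have "card (insert w B) \<le> dim W" using indep_card_le_dim[OF assms(1,2)] by blast
  then show ?thesis using B \<open>w \<notin> B\<close> by simp
qed

lemma subspace_sum_set: "subspace S \<Longrightarrow> subspace T \<Longrightarrow> subspace {x + y |x y. x \<in> S \<and> y \<in> T}"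
  by (rule subspace_sums)

lemma grassmann:
  assumes T: "subspace T" and Y: "subspace Y" and fd: "fdim {x + y |x y. x \<in> T \<and> y \<in> Y}"
  shows "dim {x + y |x y. x \<in> T \<and> y \<in> Y} + dim (T \<inter> Y) = dim T + dim Y"
proof -
  let ?S = "{x + y |x y. x \<in> T \<and> y \<in> Y}"
  have TS: "T \<subseteq> ?S"
  proof
    fix x assume "x \<in> T" then show "x \<in> ?S" using subspace_0[OF Y] by (metis (mono_tags, lifting) add.right_neutral mem_Collect_eq)
  qed
  have YS: "Y \<subseteq> ?S"
  proof
    fix x assume "x \<in> Y" then show "x \<in> ?S" using subspace_0[OF T] by (metis (mono_tags, lifting) add.left_neutral mem_Collect_eq)
  qed
  have fdT: "fdim T" using fdim_mono[OF fd TS] .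
  have fdY: "fdim Y" using fdim_mono[OF fd YS] .
  have fdTY: "fdim (T \<inter> Y)" using fdim_mono[OF fdT] by blast
  obtain C where C: "C \<subseteq> T \<inter> Y" "independent C" "span C = T \<inter> Y" "finite C" "card C = dim (T \<inter> Y)"
    using basis_fd[OF subspace_inter[OF T Y] fdTY] by blast
  obtain BY where BY: "C \<subseteq> BY" "BY \<subseteq> Y" "independent BY" "Y \<subseteq> span BY"
    using maximal_independent_subset_extend[of C Y] C by blast
  have spBY: "span BY = Y" using BY Y span_minimal by (simp add: span_subspace)
  have fBY: "finite BY" "card BY = dim Y"
    using indep_card_le_dim[OF Y fdY BY(2,3)] apply blast
  proof -
    have "span Y = Y" using Y by simp
    then have "span BY = span Y" using spBY by (simp only:)
    then show "card BY = dim Y" using dim_eq_card[OF _ BY(3)] by simp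
  qed
  obtain B where B: "BY \<subseteq> B" "B \<subseteq> BY \<union> T" "independent B" "BY \<union> T \<subseteq> span B"
    using maximal_independent_subset_extend[of BY "BY \<union> T"] BY by blast
  have BS: "B \<subseteq> ?S" using B(2) BY(2) TS YS by blast
  have spB: "span B = ?S"
  proof
    show "span B \<subseteq> ?S" using BS span_minimal subspace_sums[OF T Y] by blast
    show "?S \<subseteq> span B"
    proof
      fix z assume "z \<in> ?S"
      then obtain x y where "z = x + y" "x \<in> T" "y \<in> Y" by blast
      moreover have "x \<in> span B" using B(4) \<open>x \<in> T\<close> by blast
      moreover have "y \<in> span B" using B(1) spBY \<open>y \<in> Y\<close> span_mono by blast
      ultimately show "z \<in> span B" using span_add by blast
    qed
  qed
  have fB: "finite B" using indep_card_le_dim[OF subspace_sums[OF T Y] fd BS B(3)] by blast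
  have dS: "dim ?S = card B" 
  proof -
    have "span ?S = ?S" using subspace_sums[OF T Y] by simp
    then have "span B = span ?S" using spB by (simp only:)
    then show ?thesis using dim_eq_card[OF _ B(3)] by simp
  qed
  define D where "D = B - BY"
  have DT: "D \<subseteq> T" using B(2) unfolding D_def by blast
  have cardB: "card B = card BY + card D"
  proof -
    have "finite BY" using fB B(1) finite_subset by blast
    then have "card D = card B - card BY" using D_def B(1) card_Diff_subset by blast
    moreover have "card BY \<le> card B" using fB B(1) card_mono by blast
    ultimately show ?thesis by simp
  qed
  have CD: "C \<inter> D = {}" using BY(1) unfolding D_def by blast
  have indCD: "independent (C \<union> D)"
  proof -
    have "C \<union> D \<subseteq> B" using BY(1) B(1) unfolding D_def by blast
    then show ?thesis using independent_mono[OF B(3)] by blast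
  qed
  have spCD: "span (C \<union> D) = T"
  proof
    have "C \<union> D \<subseteq> T" using C(1) DT by blast
    then show "span (C \<union> D) \<subseteq> T" using span_minimal[OF _ T] by blast
    show "T \<subseteq> span (C \<union> D)"
    proof
      fix t assume t: "t \<in> T"
      have "B = BY \<union> D" using B(1) unfolding D_def by blast
      then have "t \<in> span (BY \<union> D)" using B(4) t by auto
      then obtain y d where yd: "t = y + d" "y \<in> span BY" "d \<in> span D"
        using span_Un by blast
      have "d \<in> T" using yd(3) span_minimal[OF DT T] by blast
      then have "y \<in> T" using subspace_diff[OF T t \<open>d \<in> T\<close>] yd(1) by simp
      moreover have "y \<in> Y" using yd(2) spBY by simp
      ultimately have "y \<in> span C" using C(3) by simp
      then have "y \<in> span (C \<union> D)" using span_mono[of C "C \<union> D"] by blast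
      moreover have "d \<in> span (C \<union> D)" using yd(3) span_mono[of D "C \<union> D"] by blast
      ultimately show "t \<in> span (C \<union> D)" using yd(1) span_add by blast
    qed
  qed
  have fD: "finite D" using fB unfolding D_def by simp
  have "dim T = card (C \<union> D)" 
  proof -
    have "span T = T" using T by simp
    then have "span (C \<union> D) = span T" using spCD by (simp only:)
    then show ?thesis using dim_eq_card[OF _ indCD] by simp
  qed
  also have "\<dots> = card C + card D" using CD C(4) fD card_Un_disjoint by blast
  finally show ?thesis using dS cardB fBY C(5) by simp
qed


lemma rank_nullity_fd:
  assumes add: "\<And>x y. f (x + y) = f x + f y" and sc: "\<And>c x. f (c *s x) = c *s f x"
    and V: "subspace V" and fdV: "fdim V"
  shows "dim V = dim {v\<in>V. f v = 0} + dim (f ` V)"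
proof -
  interpret fh: module_hom scale scale f
    using add sc module_hom_iff module_axioms by blast
  define K where "K = {v\<in>V. f v = 0}"
  have Ksub: "subspace K"
  proof -
    have "K = V \<inter> {x. f x = 0}" unfolding K_def by blast
    then show ?thesis using subspace_inter[OF V fh.subspace_kernel] by simp
  qed
  have KV: "K \<subseteq> V" unfolding K_def by blast
  have fdK: "fdim K" using fdim_mono[OF fdV KV] .
  obtain C where C: "C \<subseteq> K" "independent C" "span C = K" "finite C" "card C = dim K"
    using basis_fd[OF Ksub fdK] by blast
  have CV: "C \<subseteq> V" using C(1) KV by blast
  obtain B where B: "C \<subseteq> B" "B \<subseteq> V" "independent B" "V \<subseteq> span B"
    using maximal_independent_subset_extend[OF CV C(2)] by blast
  have spB: "span B = V" using B span_minimal[OF B(2) V] by blast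
  have fB: "finite B" using indep_card_le_dim[OF V fdV B(2,3)] by blast
  have dV: "dim V = card B"
  proof -
    have "span V = V" using V by simp
    then have "span B = span V" using spB by (simp only:)
    then show ?thesis using dim_eq_card[OF _ B(3)] by simp
  qed
  define D where "D = B - C"
  have BCD: "B = C \<union> D" "C \<inter> D = {}" unfolding D_def using B(1) by blast+
  have fD: "finite D" using fB unfolding D_def by simp
  have key: "False" if "d \<in> D" "e \<in> span (D - {d})" "f d = f e" for d e
  proof -
    have eV: "e \<in> V"
    proof -
      have "D - {d} \<subseteq> B" unfolding D_def by blast
      then show ?thesis using that(2) span_mono spB by blast
    qed
    have dV': "d \<in> V" using that(1) B(2) unfolding D_def by blast
    have "f (d - e) = 0" using that(3) fh.diff by simp
    then have "d - e \<in> K" unfolding K_def using subspace_diff[OF V dV' eV] by blast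
    then have "d - e \<in> span (B - {d})"
    proof -
      have "C \<subseteq> B - {d}" using that(1) B(1) unfolding D_def by blast
      then show ?thesis using C(3) span_mono[of C "B - {d}"] \<open>d - e \<in> K\<close> by blast
    qed
    moreover have "e \<in> span (B - {d})"
    proof -
      have "D - {d} \<subseteq> B - {d}" unfolding D_def by blast
      then show ?thesis using that(2) span_mono[of "D - {d}" "B - {d}"] by blast
    qed
    ultimately have "d \<in> span (B - {d})" using span_add by fastforce
    moreover have "d \<in> B" using that(1) unfolding D_def by blast
    ultimately show False using B(3) dependent_def by blast
  qed
  have inj: "inj_on f D"
  proof (rule inj_onI, rule ccontr)
    fix d1 d2 assume h: "d1 \<in> D" "d2 \<in> D" "f d1 = f d2" "d1 \<noteq> d2"
    have "d2 \<in> D - {d1}" using h by blast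
    then have "d2 \<in> span (D - {d1})" by (rule span_base)
    from key[OF h(1) this h(3)] show False .
  qed
  have indf: "independent (f ` D)"
  proof
    assume "dependent (f ` D)"
    then obtain a where a: "a \<in> f ` D" "a \<in> span (f ` D - {a})" using dependent_def by blast
    then obtain d where d: "d \<in> D" "a = f d" by blast
    have "f ` D - {a} = f ` (D - {d})" using inj d by (auto simp: inj_on_def)
    then have "a \<in> f ` span (D - {d})" using a(2) fh.span_image by simp
    then obtain e where e: "e \<in> span (D - {d})" "a = f e" by blast
    have "f d = f e" using d(2) e(2) by simp
    from key[OF d(1) e(1) this] show False .
  qed
  have spfD: "span (f ` D) = f ` V"
  proof
    show "span (f ` D) \<subseteq> f ` V"
      using fh.span_image[of D] span_mono[of D B] spB BCD by blast
    show "f ` V \<subseteq> span (f ` D)"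
    proof
      fix w assume "w \<in> f ` V"
      then obtain v where v: "v \<in> V" "w = f v" by blast
      then have "v \<in> span (C \<union> D)" using spB BCD by simp
      then obtain c d where cd: "v = c + d" "c \<in> span C" "d \<in> span D" using span_Un by blast
      have "c \<in> K" using cd(2) C(3) by simp
      then have "f c = 0" unfolding K_def by simp
      then have "w = f d" using v cd fh.add by simp
      then show "w \<in> span (f ` D)" using cd(3) fh.span_image by blast
    qed
  qed
  have "dim (f ` V) = card (f ` D)"
  proof -
    have "subspace (f ` V)" using fh.subspace_image[OF V] .
    then have "span (f ` V) = f ` V" by simp
    then have "span (f ` D) = span (f ` V)" using spfD by (simp only:)
    then show ?thesis using dim_eq_card[OF _ indf] by simp
  qed
  also have "\<dots> = card D" using card_image[OF inj] .
  finally have "dim (f ` V) = card D" .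
  moreover have "card B = card C + card D" using BCD C(4) fD card_Un_disjoint by simp
  ultimately show ?thesis using dV C(5) unfolding K_def by simp
qed

end

lemma vs3: "vector_space (scale3 :: 'k::field \<Rightarrow> 'k poly3 \<Rightarrow> 'k poly3)"
  by unfold_locales (auto simp: scale3_def fun_eq_iff algebra_simps)

interpretation VS: vector_space "scale3 :: 'k::field \<Rightarrow> 'k poly3 \<Rightarrow> 'k poly3"
  by (rule vs3)

lemma dim3_VS: "dim3 V = VS.dim V"
  by (simp add: dim3_def)

lemma scale3_apply [simp]: "scale3 c p m = c * p m"
  by (simp add: scale3_def)

lemma sum_app: "(sum f A) x = sum (\<lambda>a. f a x) A"
  by (induction A rule: infinite_finite_induct) auto

definition mn :: "nat \<times> nat \<times> nat \<Rightarrow> 'k::{zero,one} poly3" where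
  "mn a = (\<lambda>b. if b = a then 1 else 0)"

definition mons :: "nat \<Rightarrow> (nat \<times> nat \<times> nat) set" where
  "mons j = {a. mdeg a = j}"

lemma mdeg_madd [simp]: "mdeg (madd a b) = mdeg a + mdeg b"
  by (cases a; cases b) auto

lemma madd_comm: "madd a b = madd b a"
  by (cases a; cases b) auto

lemma madd_assoc: "madd (madd a b) c = madd a (madd b c)"
  by (cases a; cases b; cases c) auto

lemma madd_0 [simp]: "madd (0,0,0) a = a" "madd a (0,0,0) = a"
  by (cases a; auto)+

lemma madd_cancel [simp]: "madd a b = madd a c \<longleftrightarrow> b = c"
  by (cases a; cases b; cases c) auto

lemma finite_mons: "finite (mons j)"
proof -
  have "mons j \<subseteq> {..j} \<times> {..j} \<times> {..j}" unfolding mons_def by auto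
  then show ?thesis using finite_subset by blast
qed

lemma homog_supp: "homog j p \<Longrightarrow> supp3 p \<subseteq> mons j"
  by (auto simp: homog_def supp3_def mons_def)

lemma homog_finite: "homog j p \<Longrightarrow> finite (supp3 p)"
  using homog_supp finite_mons finite_subset by blast

lemma homog_poly: "homog j p \<Longrightarrow> is_poly3 p"
  using homog_finite is_poly3_def by blast

lemma poly_expand:
  assumes "finite A" "supp3 p \<subseteq> A"
  shows "p = (\<Sum>a\<in>A. scale3 (p a) (mn a))"
proof
  fix b
  have "(\<Sum>a\<in>A. scale3 (p a) (mn a)) b = (\<Sum>a\<in>A. p a * (if b = a then 1 else 0))"
    by (simp add: sum_app mn_def)
  also have "\<dots> = (\<Sum>a\<in>A. if b = a then p a else 0)"
    by (rule sum.cong) auto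
  also have "\<dots> = p b"
    using assms by (cases "b \<in> A") (auto simp: supp3_def)
  finally show "p b = (\<Sum>a\<in>A. scale3 (p a) (mn a)) b" by simp
qed

lemma mono_apply_sum:
  assumes "finite t" "t \<subseteq> mn ` A" "mn a \<in> t"
  shows "(\<Sum>v\<in>t. scale3 (u v) v) a = (u (mn a) :: 'k::field)"
proof -
  have "(\<Sum>v\<in>t. scale3 (u v) v) a = (\<Sum>v\<in>t. u v * v a)" by (simp add: sum_app)
  also have "\<dots> = (\<Sum>v\<in>{mn a}. u v * v a)"
  proof (rule sum.mono_neutral_right[OF assms(1)])
    show "{mn a} \<subseteq> t" using assms(3) by simp
    show "\<forall>i\<in>t - {mn a}. u i * i a = 0"
    proof
      fix v assume v: "v \<in> t - {mn a}"
      then obtain b where "v = mn b" using assms(2) by blast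
      then have "b \<noteq> a" using v by blast
      then show "u v * v a = 0" using \<open>v = mn b\<close> by (simp add: mn_def)
    qed
  qed
  also have "\<dots> = u (mn a)" by (simp add: mn_def)
  finally show ?thesis .
qed

lemma mono_indep: "VS.independent (mn ` A :: 'k::field poly3 set)"
proof
  assume "VS.dependent (mn ` A :: 'k poly3 set)"
  then obtain t u where tu: "finite t" "t \<subseteq> mn ` A" "(\<Sum>v\<in>t. scale3 (u v) v) = (0::'k poly3)"
     "\<exists>v\<in>t. u v \<noteq> 0" unfolding VS.dependent_explicit by blast
  then obtain v where v: "v \<in> t" "u v \<noteq> 0" by blast
  then obtain a where a: "v = mn a" using tu(2) by blast
  have "(\<Sum>v\<in>t. scale3 (u v) v) a = u (mn a)" using mono_apply_sum[OF tu(1,2)] v(1) a by blast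
  then show False using tu(3) v(2) a by simp
qed

lemma mono_inj: "inj (mn :: _ \<Rightarrow> 'k::zero_neq_one poly3)"
proof (rule injI)
  fix a b assume "(mn a :: 'k poly3) = mn b"
  then have "(mn a :: 'k poly3) a = mn b a" by simp
  then show "a = b" by (simp add: mn_def split: if_splits)
qed

lemma homog_add: "homog j p \<Longrightarrow> homog j q \<Longrightarrow> homog j (p + (q :: 'k::monoid_add poly3))"
  unfolding homog_def
proof (intro allI impI)
  fix m assume h: "\<forall>m. p m \<noteq> 0 \<longrightarrow> mdeg m = j" "\<forall>m. q m \<noteq> 0 \<longrightarrow> mdeg m = j" "(p + q) m \<noteq> 0"
  then have "p m \<noteq> 0 \<or> q m \<noteq> 0" by auto
  then show "mdeg m = j" using h by blast
qed

lemma homog_scale: "homog j p \<Longrightarrow> homog j (scale3 c p)"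
  unfolding homog_def by simp

lemma homog_0: "homog j 0"
  unfolding homog_def by simp

lemma graded_subspace: "VS.subspace (graded j :: 'k::field poly3 set)"
  unfolding VS.subspace_def graded_def using homog_add homog_scale homog_0 by blast

lemma graded_span: "graded j = VS.span (mn ` mons j :: 'k::field poly3 set)"
proof
  show "graded j \<subseteq> VS.span (mn ` mons j :: 'k poly3 set)"
  proof
    fix p :: "'k poly3" assume "p \<in> graded j"
    then have h: "homog j p" by (simp add: graded_def)
    have "p = (\<Sum>a\<in>mons j. scale3 (p a) (mn a))"
      using poly_expand[OF finite_mons homog_supp[OF h]] .
    also have "\<dots> \<in> VS.span (mn ` mons j)"
      by (intro VS.span_sum VS.span_scale VS.span_base) auto
    finally show "p \<in> VS.span (mn ` mons j)" .
  qed
  show "VS.span (mn ` mons j :: 'k poly3 set) \<subseteq> graded j"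
  proof (rule VS.span_minimal)
    show "(mn ` mons j :: 'k poly3 set) \<subseteq> graded j" by (auto simp: graded_def homog_def mn_def mons_def split: if_splits)
    show "VS.subspace (graded j :: 'k poly3 set)" by (rule graded_subspace)
  qed
qed


lemma graded_fdim: "VS.fdim (graded j :: 'k::field poly3 set)"
  unfolding graded_span using VS.fdim_span finite_mons by blast



section \<open>The action\<close>

definition dc :: "nat \<times> nat \<times> nat \<Rightarrow> nat \<times> nat \<times> nat \<Rightarrow> 'k::field_char_0" where
  "dc a g = of_nat (dcoef a g)"

lemma fact_div_of: "(of_nat (fact (a + u) div fact u) :: 'k::field_char_0) = fact (a + u) / fact u"
proof -
  obtain k where k: "fact (a + u) = fact u * (k::nat)" using fact_dvd[of u "a + u"] by (auto elim: dvdE)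
  have "(fact (a + u) :: 'k) = of_nat (fact (a + u))" by (simp add: of_nat_fact)
  also have "\<dots> = fact u * of_nat k" using k by (simp add: of_nat_fact)
  finally show ?thesis using k by simp
qed

lemma dc_formula: "(dc (a1, a2, a3) (u1, u2, u3) :: 'k::field_char_0) =
   fact (a1 + u1) / fact u1 * (fact (a2 + u2) / fact u2) * (fact (a3 + u3) / fact u3)"
  by (simp add: dc_def fact_div_of)

lemma dc_mult: "(dc b (madd a g) :: 'k::field_char_0) * dc a g = dc (madd a b) g"
proof -
  obtain a1 a2 a3 where a: "a = (a1, a2, a3)" by (cases a) auto
  obtain b1 b2 b3 where b: "b = (b1, b2, b3)" by (cases b) auto
  obtain g1 g2 g3 where g: "g = (g1, g2, g3)" by (cases g) auto
  have e: "b1 + (a1 + g1) = a1 + b1 + g1" "b2 + (a2 + g2) = a2 + b2 + g2" "b3 + (a3 + g3) = a3 + b3 + g3"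
    by simp_all
  show ?thesis unfolding a b g by (simp add: dc_formula e field_simps)
qed

lemma dc_zero_left [simp]: "(dc (0,0,0) g :: 'k::field_char_0) = 1"
  by (cases g) (simp add: dc_formula)

lemma dc_zero_right_nz: "(dc a (0,0,0) :: 'k::field_char_0) \<noteq> 0"
  by (cases a) (simp add: dc_formula)

lemma act_gen:
  assumes "finite A" "supp3 g \<subseteq> A"
  shows "act g G c = (\<Sum>a\<in>A. g a * G (madd a c) * dc a c)"
  unfolding act_def dc_def
  by (rule sum.mono_neutral_left) (use assms in \<open>auto simp: supp3_def\<close>)

lemma act_add_right: "act g (G1 + G2) = act g G1 + act (g :: 'k::field_char_0 poly3) G2"
  by (rule ext) (simp add: act_def sum.distrib[symmetric] algebra_simps)

lemma act_scale_right: "act g (scale3 c G) = scale3 c (act (g :: 'k::field_char_0 poly3) G)"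
  by (rule ext) (simp add: act_def sum_distrib_left algebra_simps)

lemma act_zero_right [simp]: "act g 0 = (0 :: 'k::field_char_0 poly3)"
  by (rule ext) (simp add: act_def)

lemma act_zero_left [simp]: "act 0 G = (0 :: 'k::field_char_0 poly3)"
  by (rule ext) (simp add: act_def supp3_def)

lemma supp_add: "supp3 (p + q) \<subseteq> supp3 p \<union> supp3 (q :: 'k::monoid_add poly3)"
  by (auto simp: supp3_def)

lemma supp_scale: "supp3 (scale3 c p) \<subseteq> supp3 (p :: 'k::field poly3)"
  by (auto simp: supp3_def)

lemma act_add_left:
  assumes "finite (supp3 g1)" "finite (supp3 g2)"
  shows "act (g1 + g2) G = act g1 G + act (g2 :: 'k::field_char_0 poly3) G"
proof
  fix c
  let ?A = "supp3 g1 \<union> supp3 g2"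
  have f: "finite ?A" using assms by simp
  show "act (g1 + g2) G c = (act g1 G + act g2 G) c"
    using act_gen[OF f supp_add] act_gen[OF f, of g1] act_gen[OF f, of g2]
    by (simp add: sum.distrib[symmetric] algebra_simps)
qed

lemma act_scale_left:
  assumes "finite (supp3 g)"
  shows "act (scale3 a g) G = scale3 a (act (g :: 'k::field_char_0 poly3) G)"
proof
  fix c
  show "act (scale3 a g) G c = scale3 a (act g G) c"
    using act_gen[OF assms supp_scale] act_gen[OF assms, of g]
    by (simp add: sum_distrib_left algebra_simps)
qed

lemma finite_supp_sum: "finite I \<Longrightarrow> (\<And>i. i \<in> I \<Longrightarrow> finite (supp3 (f i))) \<Longrightarrow>
  finite (supp3 (\<Sum>i\<in>I. f i :: 'k::comm_monoid_add poly3))"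
proof (induction I rule: finite_induct)
  case empty
  have "supp3 (0 :: 'k poly3) = {}" by (simp add: supp3_def)
  then show ?case by (simp only: sum.empty) simp
next
  case (insert x F)
  have e: "(\<Sum>i\<in>insert x F. f i) = f x + (\<Sum>i\<in>F. f i)" by (rule sum.insert[OF insert.hyps])
  have "finite (supp3 (f x) \<union> supp3 (\<Sum>i\<in>F. f i))" using insert by simp
  then show ?case unfolding e using supp_add[of "f x" "\<Sum>i\<in>F. f i"] finite_subset by blast
qed

lemma act_sum_left: "finite I \<Longrightarrow> (\<And>i. i \<in> I \<Longrightarrow> finite (supp3 (f i))) \<Longrightarrow>
  act (\<Sum>i\<in>I. f i) G = (\<Sum>i\<in>I. act (f i) (G :: 'k::field_char_0 poly3))"
proof (induction I rule: finite_induct)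
  case empty then show ?case by (simp only: sum.empty act_zero_left)
next
  case (insert x F)
  have e: "(\<Sum>i\<in>insert x F. f i) = f x + (\<Sum>i\<in>F. f i)" by (rule sum.insert[OF insert.hyps])
  have e2: "(\<Sum>i\<in>insert x F. act (f i) G) = act (f x) G + (\<Sum>i\<in>F. act (f i) G)" by (rule sum.insert[OF insert.hyps])
  have "act (f x + (\<Sum>i\<in>F. f i)) G = act (f x) G + act (\<Sum>i\<in>F. f i) G"
    using act_add_left[of "f x" "\<Sum>i\<in>F. f i"] finite_supp_sum[of F f] insert by blast
  have ih: "act (\<Sum>i\<in>F. f i) G = (\<Sum>i\<in>F. act (f i) G)" using insert.IH insert.prems by blast
  show ?case unfolding e e2 using \<open>act (f x + (\<Sum>i\<in>F. f i)) G = act (f x) G + act (\<Sum>i\<in>F. f i) G\<close>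
    by (simp only: ih)
qed

lemma act_sum_right: "finite I \<Longrightarrow> act g (\<Sum>i\<in>I. f i) = (\<Sum>i\<in>I. act (g :: 'k::field_char_0 poly3) (f i))"
proof (induction I rule: finite_induct)
  case empty then show ?case by (simp only: sum.empty act_zero_right)
next
  case (insert x F)
  have e: "(\<Sum>i\<in>insert x F. f i) = f x + (\<Sum>i\<in>F. f i)" by (rule sum.insert[OF insert.hyps])
  have e2: "(\<Sum>i\<in>insert x F. act g (f i)) = act g (f x) + (\<Sum>i\<in>F. act g (f i))" by (rule sum.insert[OF insert.hyps])
  show ?case unfolding e e2 act_add_right using insert by simp
qed

lemma madd_lc: "madd b (madd a c) = madd (madd a b) c"
  by (cases a; cases b; cases c) auto

lemma homogD: "homog j p \<Longrightarrow> p m \<noteq> 0 \<Longrightarrow> mdeg m = j"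
  unfolding homog_def by blast

lemma act_act:
  assumes "finite (supp3 f)" "finite (supp3 g)"
  shows "act f (act g G) c = (\<Sum>a\<in>supp3 f. \<Sum>b\<in>supp3 g.
     f a * g b * G (madd (madd a b) c) * (dc (madd a b) c :: 'k::field_char_0))"
proof -
  have "act f (act g G) c = (\<Sum>a\<in>supp3 f. f a * act g G (madd a c) * dc a c)"
    using act_gen[OF assms(1) order_refl] .
  also have "\<dots> = (\<Sum>a\<in>supp3 f. f a * (\<Sum>b\<in>supp3 g. g b * G (madd b (madd a c)) * dc b (madd a c)) * dc a c)"
    using act_gen[OF assms(2) order_refl] by simp
  also have "\<dots> = (\<Sum>a\<in>supp3 f. \<Sum>b\<in>supp3 g. f a * g b * G (madd (madd a b) c) * dc (madd a b) c)"
  proof (rule sum.cong[OF refl])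
    fix a
    have "f a * (\<Sum>b\<in>supp3 g. g b * G (madd b (madd a c)) * dc b (madd a c)) * dc a c
       = (\<Sum>b\<in>supp3 g. f a * g b * G (madd b (madd a c)) * (dc b (madd a c) * dc a c))"
      by (simp add: sum_distrib_left sum_distrib_right algebra_simps)
    also have "\<dots> = (\<Sum>b\<in>supp3 g. f a * g b * G (madd (madd a b) c) * dc (madd a b) c)"
      by (rule sum.cong[OF refl]) (simp add: dc_mult madd_lc)
    finally show "f a * (\<Sum>b\<in>supp3 g. g b * G (madd b (madd a c)) * dc b (madd a c)) * dc a c
       = (\<Sum>b\<in>supp3 g. f a * g b * G (madd (madd a b) c) * dc (madd a b) c)" .
  qed
  finally show ?thesis .
qed

lemma act_comm:
  assumes "finite (supp3 f)" "finite (supp3 g)"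
  shows "act f (act g G) = act g (act f (G :: 'k::field_char_0 poly3))"
proof
  fix c
  show "act f (act g G) c = act g (act f G) c"
    unfolding act_act[OF assms] act_act[OF assms(2,1)]
    by (subst sum.swap) (simp add: madd_comm mult_ac)
qed

lemma act_pmul:
  assumes ff: "finite (supp3 f)" and fg: "finite (supp3 g)"
  shows "act (pmul f g) G = act f (act g (G :: 'k::field_char_0 poly3))"
proof
  fix c
  let ?h = "\<lambda>p. madd (fst p) (snd p)"
  let ?P = "supp3 f \<times> supp3 g"
  let ?D = "?h ` ?P"
  have fP: "finite ?P" using ff fg by simp
  have fD: "finite ?D" using fP by simp
  have sD: "supp3 (pmul f g) \<subseteq> ?D"
  proof
    fix d assume "d \<in> supp3 (pmul f g)"
    then have "pmul f g d \<noteq> 0" by (simp add: supp3_def)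
    then have "{(a, b). a \<in> supp3 f \<and> b \<in> supp3 g \<and> madd a b = d} \<noteq> {}"
      unfolding pmul_def by (metis (no_types, lifting) sum.empty)
    then show "d \<in> ?D" by force
  qed
  have pm: "pmul f g d = (\<Sum>p\<in>{p \<in> ?P. ?h p = d}. f (fst p) * g (snd p))" for d
  proof -
    have "{(a, b). a \<in> supp3 f \<and> b \<in> supp3 g \<and> madd a b = d} = {p \<in> ?P. ?h p = d}" by auto
    then show ?thesis unfolding pmul_def by (simp add: case_prod_beta)
  qed
  have "act (pmul f g) G c = (\<Sum>d\<in>?D. pmul f g d * G (madd d c) * dc d c)"
    using act_gen[OF fD sD] .
  also have "\<dots> = (\<Sum>d\<in>?D. \<Sum>p\<in>{p \<in> ?P. ?h p = d}. f (fst p) * g (snd p) * G (madd (?h p) c) * dc (?h p) c)"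
  proof (rule sum.cong[OF refl])
    fix d
    show "pmul f g d * G (madd d c) * dc d c = (\<Sum>p\<in>{p \<in> ?P. ?h p = d}. f (fst p) * g (snd p) * G (madd (?h p) c) * dc (?h p) c)"
      unfolding pm sum_distrib_right by (rule sum.cong) auto
  qed
  also have "\<dots> = (\<Sum>p\<in>?P. f (fst p) * g (snd p) * G (madd (?h p) c) * dc (?h p) c)"
    by (rule sum.group[OF fP fD]) auto
  also have "\<dots> = (\<Sum>a\<in>supp3 f. \<Sum>b\<in>supp3 g. f a * g b * G (madd (madd a b) c) * dc (madd a b) c)"
    unfolding sum.cartesian_product by (rule sum.cong) (auto simp: case_prod_beta)
  also have "\<dots> = act f (act g G) c" using act_act[OF ff fg] by simp
  finally show "act (pmul f g) G c = act f (act g G) c" .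
qed

lemma supp_one3: "supp3 (one3 :: 'k::zero_neq_one poly3) = {(0,0,0)}"
  by (auto simp: supp3_def one3_def)

lemma act_one3 [simp]: "act one3 G = (G :: 'k::field_char_0 poly3)"
proof
  fix c
  have "supp3 (one3 :: 'k poly3) \<subseteq> {(0,0,0)}" by (rule equalityD1[OF supp_one3])
  from act_gen[OF _ this, of G c] show "act one3 G c = G c" by (simp add: one3_def)
qed

lemma act_nz_ex:
  assumes "act g G c \<noteq> (0 :: 'k::field_char_0)"
  shows "\<exists>a. g a \<noteq> 0 \<and> G (madd a c) \<noteq> 0"
proof (rule ccontr)
  assume "\<not> ?thesis"
  then have "act g G c = 0" unfolding act_def by (intro sum.neutral) (auto simp: supp3_def)
  then show False using assms by simp
qed

lemma homog_act:
  assumes "homog a g" "homog D G"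
  shows "homog (D - a) (act g (G :: 'k::field_char_0 poly3))"
  unfolding homog_def
proof (intro allI impI)
  fix c assume "act g G c \<noteq> 0"
  then obtain b where "g b \<noteq> 0" "G (madd b c) \<noteq> 0" using act_nz_ex by blast
  then have "mdeg b = a" "mdeg (madd b c) = D" using assms homogD by blast+
  then show "mdeg c = D - a" by simp
qed

lemma act_deg_big:
  assumes "homog a g" "homog D G" "D < a"
  shows "act g (G :: 'k::field_char_0 poly3) = 0"
proof (rule ext)
  fix c show "act g G c = 0 c"
  proof (rule ccontr)
    assume "act g G c \<noteq> 0 c"
    then have "act g G c \<noteq> 0" by simp
    then obtain b where "g b \<noteq> 0" "G (madd b c) \<noteq> 0" using act_nz_ex by blast
    then have "mdeg b = a" "mdeg (madd b c) = D" using assms homogD by blast+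
    then show False using assms(3) by simp
  qed
qed

lemma homog_pmul:
  assumes "homog a f" "homog b g"
  shows "homog (a + b) (pmul f (g :: 'k::comm_semiring_1 poly3))"
  unfolding homog_def
proof (intro allI impI)
  fix d assume "pmul f g d \<noteq> 0"
  then have "{(x, y). x \<in> supp3 f \<and> y \<in> supp3 g \<and> madd x y = d} \<noteq> {}"
    unfolding pmul_def by (metis (no_types, lifting) sum.empty)
  then obtain x y where "x \<in> supp3 f" "y \<in> supp3 g" "madd x y = d" by blast
  then have "mdeg x = a" "mdeg y = b" using assms homogD unfolding supp3_def by blast+
  then show "mdeg d = a + b" using \<open>madd x y = d\<close> by auto
qed

lemma homog_one3: "homog 0 (one3 :: 'k::zero_neq_one poly3)"
  by (auto simp: homog_def one3_def split: if_splits)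

lemma homog_ppow: "homog 1 l \<Longrightarrow> homog n (ppow l n :: 'k::comm_semiring_1 poly3)"
proof (induction n)
  case 0 then show ?case by (simp add: homog_one3)
next
  case (Suc n) then show ?case using homog_pmul[of 1 l n "ppow l n"] by simp
qed

lemma act_ppow_Suc: "homog 1 l \<Longrightarrow> act (ppow l (Suc n)) G = act l (act (ppow l n) (G :: 'k::field_char_0 poly3))"
  using act_pmul[OF homog_finite homog_finite[OF homog_ppow]] by simp

lemma act_ppow1: "homog 1 l \<Longrightarrow> act (ppow l 1) G = act l (G :: 'k::field_char_0 poly3)"
  using act_ppow_Suc[of l 0 G] by simp

lemma act_ppow2: "homog 1 l \<Longrightarrow> act (ppow l 2) G = act l (act l (G :: 'k::field_char_0 poly3))"
  using act_ppow_Suc[of l 1 G] act_ppow1[of l G] by (simp add: numeral_2_eq_2)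

lemma act_ppow3: "homog 1 l \<Longrightarrow> act (ppow l 3) G = act l (act l (act l (G :: 'k::field_char_0 poly3)))"
  using act_ppow_Suc[of l 2 G] act_ppow2[of l G] by (simp add: numeral_3_eq_3 numeral_2_eq_2)

definition trunc :: "nat \<Rightarrow> 'k::zero poly3 \<Rightarrow> 'k poly3" where
  "trunc j g = (\<lambda>a. if mdeg a = j then g a else 0)"

lemma trunc_homog: "homog j (trunc j g)"
  unfolding homog_def trunc_def by auto

lemma trunc_id: "g \<in> graded j \<Longrightarrow> trunc j g = g"
proof (rule ext)
  fix a assume g: "g \<in> graded j"
  show "trunc j g a = g a"
  proof (cases "mdeg a = j")
    case True then show ?thesis by (simp add: trunc_def)
  next
    case False
    then have "g a = 0" using homogD[of j g a] g by (auto simp: graded_def)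
    then show ?thesis using False by (simp add: trunc_def)
  qed
qed

definition Lmap :: "'k::field_char_0 poly3 \<Rightarrow> nat \<Rightarrow> 'k poly3 \<Rightarrow> 'k poly3" where
  "Lmap G j g = act (trunc j g) G"

lemma Lmap_add: "Lmap G j (x + y) = Lmap G j x + Lmap G j y"
proof -
  have "trunc j (x + y) = trunc j x + trunc j y" unfolding trunc_def by (rule ext) simp
  then show ?thesis unfolding Lmap_def
    using act_add_left[OF homog_finite[OF trunc_homog] homog_finite[OF trunc_homog]] by simp
qed

lemma Lmap_scale: "Lmap G j (scale3 c x) = scale3 c (Lmap G j x)"
proof -
  have "trunc j (scale3 c x) = scale3 c (trunc j x)" unfolding trunc_def by (rule ext) simp
  then show ?thesis unfolding Lmap_def
    using act_scale_left[OF homog_finite[OF trunc_homog]] by simp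
qed

lemma vs_module: "module (scale3 :: 'k::field \<Rightarrow> 'k poly3 \<Rightarrow> 'k poly3)"
  using VS.module_axioms .

lemma Lmap_hom: "module_hom scale3 scale3 (Lmap (G :: 'k::field_char_0 poly3) j)"
  unfolding module_hom_iff using vs_module[where 'k='k] Lmap_add[of G j] Lmap_scale[of G j] by blast

definition img :: "'k::field_char_0 poly3 \<Rightarrow> nat \<Rightarrow> 'k poly3 set" where
  "img G j = (\<lambda>g. act g G) ` graded j"

lemma img_Lmap: "img G j = Lmap G j ` graded j"
  unfolding img_def Lmap_def by (rule image_cong[OF refl]) (simp add: trunc_id)

lemma img_subspace: "VS.subspace (img G j)"
proof -
  interpret Lh: module_hom scale3 scale3 "Lmap G j" by (rule Lmap_hom)
  show ?thesis unfolding img_Lmap by (rule Lh.subspace_image[OF graded_subspace])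
qed

lemma img_fdim: "VS.fdim (img G j)"
proof -
  interpret Lh: module_hom scale3 scale3 "Lmap G j" by (rule Lmap_hom)
  have "img G j = VS.span (Lmap G j ` mn ` mons j)"
    unfolding img_Lmap graded_span Lh.span_image ..
  then show ?thesis using VS.fdim_span[OF finite_imageI[OF finite_imageI[OF finite_mons]]] by simp
qed

lemma hilb_img: "hilb (G :: 'k::field_char_0 poly3) j = dim3 (img G j)"
proof -
  have rn: "VS.dim (graded j :: 'k poly3 set) = VS.dim {v\<in>graded j. Lmap G j v = 0} + VS.dim (Lmap G j ` graded j)"
    by (rule VS.rank_nullity_fd[OF Lmap_add Lmap_scale graded_subspace graded_fdim])
  have "{v\<in>graded j. Lmap G j v = 0} = graded j \<inter> Ann G"
    unfolding Ann_def Lmap_def using trunc_id homog_poly unfolding graded_def by auto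
  then show ?thesis using rn unfolding hilb_def dim3_VS img_Lmap by simp
qed

lemma dim_zero_space: "VS.dim {0 :: 'k::field poly3} = 0"
proof -
  have "VS.span {} = VS.span {0 :: 'k poly3}" by simp
  then show ?thesis using VS.dim_eq_card[of "{}" "{0 :: 'k poly3}"] VS.independent_empty by simp
qed

lemma hilb_zero: "hilb (0 :: 'k::field_char_0 poly3) j = 0"
proof -
  have "img (0 :: 'k poly3) j = {0}"
  proof
    show "img (0 :: 'k poly3) j \<subseteq> {0}" unfolding img_def by auto
    have "(0 :: 'k poly3) \<in> graded j" unfolding graded_def using homog_0 by simp
    then show "{0} \<subseteq> img (0 :: 'k poly3) j" unfolding img_def by force
  qed
  then show ?thesis unfolding hilb_img dim3_VS using dim_zero_space by simp
qed

lemma graded0: "g \<in> graded 0 \<Longrightarrow> g = scale3 (g (0,0,0)) (one3 :: 'k::field poly3)"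
proof (rule ext)
  fix a assume g: "g \<in> graded 0"
  show "g a = scale3 (g (0,0,0)) one3 a"
  proof (cases "a = (0,0,0)")
    case True then show ?thesis by (simp add: one3_def)
  next
    case False
    then have "mdeg a \<noteq> 0" by (cases a) auto
    then have "g a = 0" using homogD[of 0 g a] g by (auto simp: graded_def)
    then show ?thesis using False by (simp add: one3_def)
  qed
qed

lemma hilb_at0:
  assumes "G \<noteq> (0 :: 'k::field_char_0 poly3)"
  shows "hilb G 0 = 1"
proof -
  have fo: "finite (supp3 (one3 :: 'k poly3))" using supp_one3[where 'k='k] by simp
  have "img G 0 = VS.span {G}"
  proof
    show "img G 0 \<subseteq> VS.span {G}"
    proof
      fix v assume "v \<in> img G 0"
      then obtain g where g: "g \<in> graded 0" "v = act g G" unfolding img_def by blast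
      have "v = act (scale3 (g (0,0,0)) one3) G" using g graded0[OF g(1)] by simp
      also have "\<dots> = scale3 (g (0,0,0)) (act one3 G)" by (rule act_scale_left[OF fo])
      finally have "v = scale3 (g (0,0,0)) G" by simp
      have "G \<in> VS.span {G}" by (rule VS.span_base) simp
      then show "v \<in> VS.span {G}" unfolding \<open>v = scale3 (g (0,0,0)) G\<close> by (rule VS.span_scale)
    qed
    show "VS.span {G} \<subseteq> img G 0"
    proof
      fix v assume "v \<in> VS.span {G}"
      then obtain c where c: "v = scale3 c G" unfolding VS.span_singleton by blast
      have "scale3 c one3 \<in> graded 0" using homog_one3 homog_scale unfolding graded_def by blast
      moreover have "act (scale3 c one3) G = v" using act_scale_left[OF fo] c by simp
      ultimately show "v \<in> img G 0" unfolding img_def by blast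
    qed
  qed
  then have "VS.dim (img G 0) = VS.dim {G}" by (simp only: VS.dim_span)
  also have "\<dots> = 1"
  proof -
    have "VS.independent {G}" using assms by (simp only: VS.dependent_single) simp
    from VS.dim_eq_card_independent[OF this] show ?thesis by simp
  qed
  finally show ?thesis unfolding hilb_img dim3_VS .
qed

lemma img_homog:
  assumes "homog D G" "v \<in> img G j"
  shows "homog (D - j) v"
proof -
  obtain g where g: "g \<in> graded j" "v = act g G" using assms(2) unfolding img_def by blast
  then have "homog j g" by (simp add: graded_def)
  from homog_act[OF this assms(1)] show ?thesis using g(2) by simp
qed

lemma act_mn_at0: "act (mn a) v (0,0,0) = v a * (dc a (0,0,0) :: 'k::field_char_0)"
proof -
  have "supp3 (mn a :: 'k poly3) \<subseteq> {a}" by (auto simp: supp3_def mn_def)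
  from act_gen[OF _ this, of v "(0,0,0)"] show ?thesis by (simp add: mn_def)
qed

lemma nondeg:
  assumes "homog e v" "\<And>g. g \<in> graded e \<Longrightarrow> act g v (0,0,0) = (0 :: 'k::field_char_0)"
  shows "v = 0"
proof (rule ext)
  fix a show "v a = 0 a"
  proof (rule ccontr)
    assume "v a \<noteq> 0 a"
    then have va: "v a \<noteq> 0" by simp
    then have "mdeg a = e" using assms(1) homogD by blast
    then have "mn a \<in> graded e" unfolding graded_def homog_def mn_def by auto
    then have "act (mn a) v (0,0,0) = 0" using assms(2) by blast
    then show False using act_mn_at0[of a v] va dc_zero_right_nz[of a, where 'k='k] by simp
  qed
qed


lemma homog_graded_finite: "g \<in> graded j \<Longrightarrow> finite (supp3 g)"
  unfolding graded_def using homog_finite by blast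

lemma hilb_sym_le:
  fixes G :: "'k::field_char_0 poly3"
  assumes hG: "homog D G" and jD: "j \<le> D"
  shows "hilb G j \<le> hilb G (D - j)"
proof -
  define e where "e = D - j"
  obtain Bs where Bs: "Bs \<subseteq> img G e" "VS.independent Bs" "VS.span Bs = img G e" "finite Bs"
      "card Bs = VS.dim (img G e)"
    using VS.basis_fd[OF img_subspace img_fdim] by blast
  have "\<forall>b\<in>Bs. \<exists>g. g \<in> graded e \<and> act g G = b" using Bs(1) unfolding img_def by blast
  then obtain gb where gb: "\<And>b. b \<in> Bs \<Longrightarrow> gb b \<in> graded e \<and> act (gb b) G = b" by metis
  obtain \<iota> where \<iota>: "bij_betw \<iota> Bs {0..<card Bs}" using ex_bij_betw_finite_nat[OF Bs(4)] by blast
  have \<iota>inj: "inj_on \<iota> Bs" using \<iota> bij_betw_def by blast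
  define \<Phi> where "\<Phi> H = (\<Sum>b\<in>Bs. scale3 (act (gb b) H (0,0,0)) (mn (\<iota> b, 0::nat, 0::nat)))" for H :: "'k poly3"
  have \<Phi>add: "\<Phi> (x + y) = \<Phi> x + \<Phi> y" for x y
    by (rule ext) (simp add: \<Phi>_def act_add_right sum_app sum.distrib[symmetric] algebra_simps)
  have \<Phi>sc: "\<Phi> (scale3 c x) = scale3 c (\<Phi> x)" for c x
    by (rule ext) (simp add: \<Phi>_def act_scale_right sum_app sum_distrib_left algebra_simps)
  have rn: "VS.dim (img G j) = VS.dim {v\<in>img G j. \<Phi> v = 0} + VS.dim (\<Phi> ` img G j)"
    by (rule VS.rank_nullity_fd[OF \<Phi>add \<Phi>sc img_subspace img_fdim])
  have ker: "{v\<in>img G j. \<Phi> v = 0} \<subseteq> {0}"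
  proof
    fix v assume "v \<in> {v\<in>img G j. \<Phi> v = 0}"
    then have v: "v \<in> img G j" "\<Phi> v = 0" by auto
    obtain f where f: "f \<in> graded j" "v = act f G" using v(1) unfolding img_def by blast
    have ff: "finite (supp3 f)" using homog_graded_finite[OF f(1)] .
    have coef: "act (gb b) v (0,0,0) = 0" if b: "b \<in> Bs" for b
    proof -
      have "\<Phi> v (\<iota> b, 0, 0) = (\<Sum>b'\<in>Bs. act (gb b') v (0,0,0) * (if b' = b then 1 else 0))"
        unfolding \<Phi>_def sum_app
      proof (rule sum.cong[OF refl])
        fix b' assume b': "b' \<in> Bs"
        have "((\<iota> b, 0::nat, 0::nat) = (\<iota> b', 0, 0)) = (b' = b)" using inj_onD[OF \<iota>inj _ b' b] by auto
        then show "scale3 (act (gb b') v (0, 0, 0)) (mn (\<iota> b', 0, 0)) (\<iota> b, 0, 0) =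
           act (gb b') v (0, 0, 0) * (if b' = b then 1 else 0)" by (simp add: mn_def)
      qed
      also have "\<dots> = act (gb b) v (0,0,0)"
        using b Bs(4) by (simp add: if_distrib[of "\<lambda>x. _ * x"] sum.delta' cong: if_cong)
      finally show ?thesis using v(2) by simp
    qed
    have all: "act g v (0,0,0) = 0" if g: "g \<in> graded e" for g
    proof -
      have "act g G \<in> img G e" using g unfolding img_def by blast
      then have "act g G \<in> range (\<lambda>u. \<Sum>b\<in>Bs. scale3 (u b) b)"
        using Bs(3) VS.span_finite[OF Bs(4)] by simp
      then obtain u where u: "act g G = (\<Sum>b\<in>Bs. scale3 (u b) b)" by blast
      have fg: "finite (supp3 g)" using homog_graded_finite[OF g] .
      have "act g v = act f (act g G)" using f(2) act_comm[OF fg ff] by simp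
      also have "\<dots> = (\<Sum>b\<in>Bs. scale3 (u b) (act f b))"
        unfolding u act_sum_right[OF Bs(4)] act_scale_right ..
      also have "\<dots> = (\<Sum>b\<in>Bs. scale3 (u b) (act (gb b) v))"
      proof (rule sum.cong[OF refl])
        fix b assume b: "b \<in> Bs"
        have g1: "gb b \<in> graded e" "act (gb b) G = b" using gb[OF b] by auto
        have "act f b = act f (act (gb b) G)" using g1 by simp
        also have "\<dots> = act (gb b) (act f G)" using act_comm[OF ff homog_graded_finite[OF g1(1)]] by simp
        finally show "scale3 (u b) (act f b) = scale3 (u b) (act (gb b) v)" using f(2) by simp
      qed
      finally have "act g v (0,0,0) = (\<Sum>b\<in>Bs. u b * act (gb b) v (0,0,0))" by (simp add: sum_app)
      also have "\<dots> = 0" using coef by simp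
      finally show ?thesis .
    qed
    have "homog e v" unfolding e_def by (rule img_homog[OF hG v(1)])
    from nondeg[OF this all] show "v \<in> {0}" by simp
  qed
  have dk: "VS.dim {v\<in>img G j. \<Phi> v = 0} = 0"
  proof -
    have "{v\<in>img G j. \<Phi> v = 0} \<subseteq> VS.span {}" using ker by simp
    from VS.dim_le_card[OF this] show ?thesis by simp
  qed
  let ?M = "mn ` (\<lambda>b. (\<iota> b, 0::nat, 0::nat)) ` Bs :: 'k poly3 set"
  have "\<Phi> ` img G j \<subseteq> VS.span ?M"
  proof
    fix w assume "w \<in> \<Phi> ` img G j"
    then obtain H where "w = \<Phi> H" by blast
    have "\<Phi> H \<in> VS.span ?M" unfolding \<Phi>_def
      apply (rule VS.span_sum) apply (rule VS.span_scale) apply (rule VS.span_base) by auto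
    then show "w \<in> VS.span ?M" using \<open>w = \<Phi> H\<close> by simp
  qed
  then have "VS.dim (\<Phi> ` img G j) \<le> card ?M" using VS.dim_le_card Bs(4) by blast
  also have "\<dots> \<le> card Bs" using card_image_le Bs(4) by (meson finite_imageI le_trans)
  finally have "VS.dim (img G j) \<le> card Bs" using rn dk by simp
  then show ?thesis unfolding hilb_img dim3_VS using Bs(5) e_def by simp
qed

lemma hilb_sym:
  fixes G :: "'k::field_char_0 poly3"
  assumes "homog D G" "j \<le> D"
  shows "hilb G j = hilb G (D - j)"
  using hilb_sym_le[OF assms] hilb_sym_le[OF assms(1), of "D - j"] assms(2) by simp

fun comp :: "nat \<Rightarrow> nat \<times> nat \<times> nat \<Rightarrow> nat" where
  "comp k (a, b, c) = (if k = 0 then a else if k = 1 then b else c)"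

definition ev :: "nat \<Rightarrow> nat \<times> nat \<times> nat" where
  "ev k = (if k = 0 then (1,0,0) else if k = 1 then (0,1,0) else (0,0,1))"

lemma comp_madd [simp]: "comp j (madd a b) = comp j a + comp j b"
  by (cases a; cases b) auto

lemma comp_ev: "j < 3 \<Longrightarrow> k < 3 \<Longrightarrow> comp j (ev k) = (if j = k then 1 else 0)"
  by (auto simp: ev_def)

lemma mdeg_ev [simp]: "mdeg (ev k) = 1"
  by (auto simp: ev_def)

lemma split_ev:
  assumes "k < 3" "comp k a \<ge> 1"
  shows "\<exists>b. a = madd (ev k) b"
proof -
  obtain x y z where a: "a = (x, y, z)" by (cases a) auto
  show ?thesis
  proof (cases "k = 0")
    case True then show ?thesis using assms a by (intro exI[of _ "(x - 1, y, z)"]) (auto simp: ev_def)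
  next
    case False
    show ?thesis
    proof (cases "k = 1")
      case True then show ?thesis using assms a by (intro exI[of _ "(x, y - 1, z)"]) (auto simp: ev_def)
    next
      case False
      then have "k = 2" using \<open>k \<noteq> 0\<close> assms(1) by auto
      then show ?thesis using assms a by (intro exI[of _ "(x, y, z - 1)"]) (auto simp: ev_def)
    qed
  qed
qed

lemma mons1: "mons 1 = ev ` {0,1,2}"
proof
  show "mons 1 \<subseteq> ev ` {0,1,2}"
  proof
    fix a assume "a \<in> mons 1"
    then obtain x y z where a: "a = (x,y,z)" "x + y + z = 1" unfolding mons_def by (cases a) auto
    then have "a = ev 0 \<or> a = ev 1 \<or> a = ev 2" by (auto simp: ev_def)
    then show "a \<in> ev ` {0,1,2}" by blast
  qed
  show "ev ` {0,1,2} \<subseteq> mons 1" by (auto simp: mons_def)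
qed

lemma ev_inj: "inj_on ev {0,1,2}"
  by (auto simp: inj_on_def ev_def)

lemma lin_expand:
  assumes "homog 1 l"
  shows "l = (\<Sum>k\<in>{0,1,2}. scale3 (l (ev k)) (mn (ev k) :: 'k::field poly3))"
proof -
  have "l = (\<Sum>a\<in>ev ` {0,1,2}. scale3 (l a) (mn a))"
    using poly_expand[of "ev ` {0,1,2}" l] homog_supp[OF assms] mons1 by simp
  also have "\<dots> = (\<Sum>k\<in>{0,1,2}. scale3 (l (ev k)) (mn (ev k)))"
    by (rule sum.reindex[OF ev_inj, unfolded comp_def])
  finally show ?thesis .
qed

lemma supp_mn: "supp3 (mn a :: 'k::zero_neq_one poly3) = {a}"
  by (auto simp: supp3_def mn_def)

lemma finite_supp_mn: "finite (supp3 (mn a :: 'k::zero_neq_one poly3))"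
  by (simp add: supp_mn)

lemma act_lin:
  assumes "homog 1 l"
  shows "act l H = (\<Sum>k\<in>{0,1,2}. scale3 (l (ev k)) (act (mn (ev k)) (H :: 'k::field_char_0 poly3)))"
proof -
  have "act l H = act (\<Sum>k\<in>{0,1,2}. scale3 (l (ev k)) (mn (ev k))) H"
    using lin_expand[OF assms] by simp
  also have "\<dots> = (\<Sum>k\<in>{0,1,2}. act (scale3 (l (ev k)) (mn (ev k))) H)"
    by (rule act_sum_left) (auto intro: finite_subset[OF supp_scale] simp: supp_mn)
  also have "\<dots> = (\<Sum>k\<in>{0,1,2}. scale3 (l (ev k)) (act (mn (ev k)) H))"
    by (rule sum.cong[OF refl]) (rule act_scale_left[OF finite_supp_mn])
  finally show ?thesis .
qed

lemma pmul_mn_at: "pmul (mn b) p (madd b a) = (p a :: 'k::comm_semiring_1)"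
proof -
  have S: "{(x, y). x \<in> supp3 (mn b :: 'k poly3) \<and> y \<in> supp3 p \<and> madd x y = madd b a}
        = (if p a = 0 then {} else {(b, a)})"
  proof (rule set_eqI)
    fix q :: "(nat \<times> nat \<times> nat) \<times> (nat \<times> nat \<times> nat)"
    obtain x y where q: "q = (x, y)" by (cases q)
    show "q \<in> {(x, y). x \<in> supp3 (mn b :: 'k poly3) \<and> y \<in> supp3 p \<and> madd x y = madd b a}
       \<longleftrightarrow> q \<in> (if p a = 0 then {} else {(b, a)})"
      unfolding q using supp_mn[of b, where 'k='k] by (auto simp: supp3_def)
  qed
  show ?thesis unfolding pmul_def S by (simp add: mn_def)
qed

lemma pmul_mn_off: "(\<And>a. c \<noteq> madd b a) \<Longrightarrow> pmul (mn b) p c = (0 :: 'k::comm_semiring_1)"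
proof -
  assume h: "\<And>a. c \<noteq> madd b a"
  have S: "{(x, y). x \<in> supp3 (mn b :: 'k poly3) \<and> y \<in> supp3 p \<and> madd x y = c} = {}"
  proof (rule set_eqI)
    fix q :: "(nat \<times> nat \<times> nat) \<times> (nat \<times> nat \<times> nat)"
    obtain x y where q: "q = (x, y)" by (cases q)
    show "q \<in> {(x, y). x \<in> supp3 (mn b :: 'k poly3) \<and> y \<in> supp3 p \<and> madd x y = c} \<longleftrightarrow> q \<in> {}"
      unfolding q mem_Collect_eq case_prod_conv supp_mn using h[of y] by auto
  qed
  show ?thesis unfolding pmul_def S by simp
qed

lemma pmul_mn_mn: "pmul (mn a) (mn b) = (mn (madd a b) :: 'k::comm_semiring_1 poly3)"
proof
  fix c
  show "pmul (mn a) (mn b) c = (mn (madd a b) :: 'k poly3) c"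
  proof (cases "\<exists>x. c = madd a x")
    case True
    then obtain x where "c = madd a x" by blast
    then show ?thesis using pmul_mn_at[of a "mn b :: 'k poly3" x] by (simp add: mn_def)
  next
    case False
    then have h: "\<And>x. c \<noteq> madd a x" by blast
    then have "c \<noteq> madd a b" by blast
    then show ?thesis using pmul_mn_off[OF h, of "mn b :: 'k poly3"] by (simp add: mn_def)
  qed
qed

lemma act_mn_mn: "act (mn a) (act (mn b) G) = act (mn (madd a b)) (G :: 'k::field_char_0 poly3)"
  using act_pmul[OF finite_supp_mn finite_supp_mn, of a b G] pmul_mn_mn[of a b, where 'k='k] by simp

definition sh :: "nat \<times> nat \<times> nat \<Rightarrow> 'k::comm_semiring_1 poly3 \<Rightarrow> 'k poly3" where
  "sh b p = pmul (mn b) p"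

lemma sh_add: "sh b (x + y) = sh b x + sh b (y :: 'k::comm_semiring_1 poly3)"
proof
  fix c show "sh b (x + y) c = (sh b x + sh b y) c"
  proof (cases "\<exists>a. c = madd b a")
    case True then obtain a where "c = madd b a" by blast
    then show ?thesis unfolding sh_def by (simp add: pmul_mn_at)
  next
    case False
    then have h: "\<And>a. c \<noteq> madd b a" by blast
    show ?thesis unfolding sh_def plus_fun_apply scale3_apply pmul_mn_off[OF h] by simp
  qed
qed

lemma sh_scale: "sh b (scale3 t x) = scale3 t (sh b (x :: 'k::field poly3))"
proof
  fix c show "sh b (scale3 t x) c = scale3 t (sh b x) c"
  proof (cases "\<exists>a. c = madd b a")
    case True then obtain a where "c = madd b a" by blast
    then show ?thesis unfolding sh_def by (simp add: pmul_mn_at)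
  next
    case False
    then have h: "\<And>a. c \<noteq> madd b a" by blast
    show ?thesis unfolding sh_def plus_fun_apply scale3_apply pmul_mn_off[OF h] by simp
  qed
qed

lemma sh_inj: "sh b x = 0 \<Longrightarrow> x = (0 :: 'k::comm_semiring_1 poly3)"
proof (rule ext)
  fix a assume "sh b x = 0"
  then have "sh b x (madd b a) = 0" by simp
  then show "x a = 0 a" unfolding sh_def by (simp add: pmul_mn_at)
qed


section \<open>The complement space T\<close>

definition tm :: "nat \<Rightarrow> nat \<Rightarrow> (nat \<times> nat \<times> nat) set" where
  "tm k i = {a. mdeg a = i \<and> comp k a = 0}"

definition Tsp :: "nat \<Rightarrow> nat \<Rightarrow> 'k::field poly3 set" where
  "Tsp k i = {p. homog i p \<and> (\<forall>a. p a \<noteq> 0 \<longrightarrow> comp k a = 0)}"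

lemma finite_tm: "finite (tm k i)"
  using finite_mons[of i] by (rule finite_subset[rotated]) (auto simp: tm_def mons_def)

lemma Tsp_subspace: "VS.subspace (Tsp k i :: 'k::field poly3 set)"
proof (rule VS.subspaceI)
  show "(0 :: 'k poly3) \<in> Tsp k i" by (simp add: Tsp_def homog_0)
next
  fix x y :: "'k poly3" assume x: "x \<in> Tsp k i" and y: "y \<in> Tsp k i"
  show "x + y \<in> Tsp k i" unfolding Tsp_def
  proof (intro CollectI conjI allI impI)
    show "homog i (x + y)" using x y homog_add unfolding Tsp_def by blast
    fix a assume "(x + y) a \<noteq> 0"
    then have "x a \<noteq> 0 \<or> y a \<noteq> 0" by auto
    then show "comp k a = 0" using x y unfolding Tsp_def by blast
  qed
next
  fix c and x :: "'k poly3" assume x: "x \<in> Tsp k i"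
  show "scale3 c x \<in> Tsp k i"
    using x homog_scale unfolding Tsp_def by auto
qed

lemma Tsp_span: "Tsp k i = VS.span (mn ` tm k i :: 'k::field poly3 set)"
proof
  show "Tsp k i \<subseteq> VS.span (mn ` tm k i :: 'k poly3 set)"
  proof
    fix p :: "'k poly3" assume p: "p \<in> Tsp k i"
    have sp: "supp3 p \<subseteq> tm k i" using p homogD[of i p] unfolding Tsp_def tm_def supp3_def by auto
    have "p = (\<Sum>a\<in>tm k i. scale3 (p a) (mn a))"
      using poly_expand[OF finite_tm sp] .
    also have "\<dots> \<in> VS.span (mn ` tm k i)"
      by (intro VS.span_sum VS.span_scale VS.span_base) auto
    finally show "p \<in> VS.span (mn ` tm k i)" .
  qed
  show "VS.span (mn ` tm k i :: 'k poly3 set) \<subseteq> Tsp k i"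
  proof (rule VS.span_minimal[OF _ Tsp_subspace])
    show "(mn ` tm k i :: 'k poly3 set) \<subseteq> Tsp k i"
      by (auto simp: Tsp_def homog_def mn_def tm_def split: if_splits)
  qed
qed

lemma Tsp_graded: "Tsp k i \<subseteq> graded i"
  unfolding Tsp_def graded_def by blast

lemma Tsp_fdim: "VS.fdim (Tsp k i :: 'k::field poly3 set)"
  unfolding Tsp_span using VS.fdim_span finite_tm by blast

lemma card_tm:
  assumes "k < 3"
  shows "card (tm k i) = i + 1"
proof -
  consider "k = 0" | "k = 1" | "k = 2" using assms by linarith
  then show ?thesis
  proof cases
    case 1
    have "tm k i = (\<lambda>b. (0, b, i - b)) ` {..i}"
      unfolding tm_def 1 by (auto simp: image_iff)
    moreover have "inj_on (\<lambda>b. (0::nat, b, i - b)) {..i}" by (auto simp: inj_on_def)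
    ultimately show ?thesis by (simp add: card_image)
  next
    case 2
    have "tm k i = (\<lambda>a. (a, 0, i - a)) ` {..i}"
      unfolding tm_def 2 by (auto simp: image_iff)
    moreover have "inj_on (\<lambda>a. (a, 0::nat, i - a)) {..i}" by (auto simp: inj_on_def)
    ultimately show ?thesis by (simp add: card_image)
  next
    case 3
    have "tm k i = (\<lambda>a. (a, i - a, 0)) ` {..i}"
      unfolding tm_def 3 by (auto simp: image_iff)
    moreover have "inj_on (\<lambda>a. (a, i - a, 0::nat)) {..i}" by (auto simp: inj_on_def)
    ultimately show ?thesis by (simp add: card_image)
  qed
qed

lemma dim_Tsp: "k < 3 \<Longrightarrow> VS.dim (Tsp k i :: 'k::field poly3 set) = i + 1"
proof -
  assume k: "k < 3"
  have "VS.dim (Tsp k i :: 'k poly3 set) = card (mn ` tm k i :: 'k poly3 set)"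
    unfolding Tsp_span by (rule VS.dim_span_eq_card_independent[OF mono_indep])
  also have "\<dots> = card (tm k i)" using card_image[OF inj_on_subset[OF mono_inj]] by blast
  finally show ?thesis using card_tm[OF k] by simp
qed


section \<open>Decomposition S_i o G = T_i o G + S_(i-1) o (l o G)\<close>

lemma img_Tsp_subspace: "VS.subspace ((\<lambda>t. act t G) ` Tsp k i :: 'k::field_char_0 poly3 set)"
proof -
  interpret Lh: module_hom scale3 scale3 "Lmap G i" by (rule Lmap_hom)
  have "(\<lambda>t. act t G) ` Tsp k i = Lmap G i ` Tsp k i"
    unfolding Lmap_def
  proof (rule image_cong[OF refl])
    fix x :: "'k poly3" assume "x \<in> Tsp k i"
    then have "x \<in> graded i" by (rule subsetD[OF Tsp_graded])
    then show "act x G = act (trunc i x) G" using trunc_id by metis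
  qed
  then show ?thesis using Lh.subspace_image[OF Tsp_subspace] by simp
qed

lemma pmul_graded: "u \<in> graded a \<Longrightarrow> homog b l \<Longrightarrow> pmul u l \<in> graded (a + b)"
  unfolding graded_def using homog_pmul by blast

lemma decomp:
  fixes G l :: "'k::field_char_0 poly3"
  assumes hl: "homog 1 l" and k3: "k < 3" and lk: "l (ev k) \<noteq> 0" and i1: "i \<ge> 1"
    and f: "f \<in> graded i"
  shows "act f G \<in> {x + y |x y. x \<in> (\<lambda>t. act t G) ` Tsp k i \<and> y \<in> img (act l G) (i - 1)}"
proof -
  let ?X = "(\<lambda>t. act t G) ` Tsp k i"
  let ?Y = "img (act l G) (i - 1)"
  let ?Z = "{x + y |x y. x \<in> ?X \<and> y \<in> ?Y}"
  have sX: "VS.subspace ?X" by (rule img_Tsp_subspace)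
  have sY: "VS.subspace ?Y" by (rule img_subspace)
  have sZ: "VS.subspace ?Z" by (rule VS.subspace_sums[OF sX sY])
  have XZ: "x \<in> ?Z" if "x \<in> ?X" for x
  proof -
    have "x = x + 0" by simp
    moreover have "(0 :: 'k poly3) \<in> ?Y" using VS.subspace_0[OF sY] .
    ultimately show ?thesis using that by blast
  qed
  have YZ: "y \<in> ?Z" if "y \<in> ?Y" for y
  proof -
    have "y = 0 + y" by simp
    moreover have "(0 :: 'k poly3) \<in> ?X" using VS.subspace_0[OF sX] .
    ultimately show ?thesis using that by blast
  qed
  have fl: "finite (supp3 l)" using homog_finite[OF hl] .
  have claim: "\<forall>a. mdeg a = i \<and> comp k a = n \<longrightarrow> act (mn a) G \<in> ?Z" for n
  proof (induction n rule: less_induct)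
    case (less n)
    show ?case
    proof (intro allI impI)
      fix a assume a: "mdeg a = i \<and> comp k a = n"
      show "act (mn a) G \<in> ?Z"
      proof (cases "n = 0")
        case True
        then have "mn a \<in> Tsp k i" using a by (auto simp: Tsp_def homog_def mn_def split: if_splits)
        then show ?thesis using XZ by blast
      next
        case False
        then obtain b where b: "a = madd (ev k) b" using split_ev[OF k3, of a] a by auto
        have "comp k a = comp k b + 1" using b comp_ev[OF k3 k3] by simp
        then have cb: "comp k b = n - 1" using a by linarith
        have "mdeg a = mdeg b + 1" using b by simp
        then have db: "mdeg b = i - 1" using a by linarith
        define H where "H = act (mn b) G"
        have e1: "act (mn a) G = act (mn (ev k)) H" unfolding H_def b act_mn_mn ..
        have lin: "act l H = (\<Sum>j\<in>{0,1,2}. scale3 (l (ev j)) (act (mn (ev j)) H))"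
          by (rule act_lin[OF hl])
        have lH: "act l H \<in> ?Z"
        proof -
          have "act l H = act (mn b) (act l G)" unfolding H_def by (rule act_comm[OF fl finite_supp_mn])
          moreover have "mn b \<in> graded (i - 1)" using db by (auto simp: graded_def homog_def mn_def split: if_splits)
          ultimately have "act l H \<in> ?Y" unfolding img_def by blast
          then show ?thesis using YZ by blast
        qed
        have oth: "act (mn (ev j)) H \<in> ?Z" if j: "j \<in> {0,1,2} - {k}" for j
        proof -
          have j3: "j < 3" using j by auto
          have e: "act (mn (ev j)) H = act (mn (madd (ev j) b)) G" unfolding H_def act_mn_mn ..
          have c1: "comp k (madd (ev j) b) = n - 1" using comp_ev[OF k3 j3] j cb by auto
          have c2: "mdeg (madd (ev j) b) = i" using db i1 by simp
          have "n - 1 < n" using False by simp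
          then have "\<forall>a. mdeg a = i \<and> comp k a = n - 1 \<longrightarrow> act (mn a) G \<in> ?Z" by (rule less.IH)
          then have "act (mn (madd (ev j) b)) G \<in> ?Z" using c1 c2 by blast
          then show ?thesis using e by simp
        qed
        define S where "S = (\<Sum>j\<in>{0,1,2} - {k}. scale3 (l (ev j)) (act (mn (ev j)) H))"
        have SZ: "S \<in> ?Z" unfolding S_def
          by (rule VS.subspace_sum[OF sZ]) (rule VS.subspace_scale[OF sZ oth])
        have "act l H = scale3 (l (ev k)) (act (mn (ev k)) H) + S"
          unfolding lin S_def using k3 by (subst sum.remove[of _ k]) auto
        then have "act (mn (ev k)) H = scale3 (1 / l (ev k)) (act l H - S)"
          using lk by (auto simp: fun_eq_iff field_simps)
        moreover have "act l H - S \<in> ?Z" using VS.subspace_diff[OF sZ lH SZ] .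
        ultimately have "act (mn (ev k)) H \<in> ?Z" using VS.subspace_scale[OF sZ] by simp
        then show ?thesis using e1 by simp
      qed
    qed
  qed
  have fi: "homog i f" using f by (simp add: graded_def)
  have "f = (\<Sum>a\<in>mons i. scale3 (f a) (mn a))" using poly_expand[OF finite_mons homog_supp[OF fi]] .
  then have "act f G = act (\<Sum>a\<in>mons i. scale3 (f a) (mn a)) G" by simp
  also have "\<dots> = (\<Sum>a\<in>mons i. act (scale3 (f a) (mn a)) G)"
    by (rule act_sum_left[OF finite_mons]) (rule finite_subset[OF supp_scale finite_supp_mn])
  also have "\<dots> = (\<Sum>a\<in>mons i. scale3 (f a) (act (mn a) G))"
    by (rule sum.cong[OF refl]) (rule act_scale_left[OF finite_supp_mn])
  also have "\<dots> \<in> ?Z"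
  proof (rule VS.subspace_sum[OF sZ])
    fix a assume "a \<in> mons i"
    then have "mdeg a = i" by (simp add: mons_def)
    then have "act (mn a) G \<in> ?Z" using claim by blast
    then show "scale3 (f a) (act (mn a) G) \<in> ?Z" by (rule VS.subspace_scale[OF sZ])
  qed
  finally show ?thesis .
qed


section \<open>The space U and the formula for h\<close>

definition Usp :: "nat \<Rightarrow> 'k::field_char_0 poly3 \<Rightarrow> 'k poly3 \<Rightarrow> nat \<Rightarrow> 'k poly3 set" where
  "Usp k l G i = {t \<in> Tsp k i. act t G \<in> img (act l G) (i - 1)}"

lemma Tsp_Lmap: "t \<in> Tsp k i \<Longrightarrow> Lmap G i t = act t G"
proof -
  assume "t \<in> Tsp k i"
  then have "t \<in> graded i" by (rule subsetD[OF Tsp_graded])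
  then show ?thesis unfolding Lmap_def using trunc_id by metis
qed

lemma Usp_eq: "Usp k l G i = Tsp k i \<inter> (Lmap G i -` img (act l G) (i - 1))"
proof
  show "Usp k l G i \<subseteq> Tsp k i \<inter> (Lmap G i -` img (act l G) (i - 1))"
  proof
    fix t assume "t \<in> Usp k l G i"
    then have t: "t \<in> Tsp k i" "act t G \<in> img (act l G) (i - 1)" unfolding Usp_def by auto
    have "Lmap G i t = act t G" by (rule Tsp_Lmap[OF t(1)])
    then show "t \<in> Tsp k i \<inter> (Lmap G i -` img (act l G) (i - 1))" using t by simp
  qed
  show "Tsp k i \<inter> (Lmap G i -` img (act l G) (i - 1)) \<subseteq> Usp k l G i"
  proof
    fix t assume t: "t \<in> Tsp k i \<inter> (Lmap G i -` img (act l G) (i - 1))"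
    then have "Lmap G i t = act t G" using Tsp_Lmap by blast
    then show "t \<in> Usp k l G i" using t unfolding Usp_def by simp
  qed
qed

lemma Usp_subspace: "VS.subspace (Usp k l G i)"
proof -
  interpret Lh: module_hom scale3 scale3 "Lmap G i" by (rule Lmap_hom)
  show ?thesis unfolding Usp_eq
    by (rule VS.subspace_inter[OF Tsp_subspace Lh.subspace_vimage[OF img_subspace]])
qed

lemma Usp_Tsp: "Usp k l G i \<subseteq> Tsp k i"
  unfolding Usp_def by blast

lemma Usp_fdim: "VS.fdim (Usp k l G i)"
  by (rule VS.fdim_mono[OF Tsp_fdim Usp_Tsp])

lemma qform:
  fixes G l :: "'k::field_char_0 poly3"
  assumes hl: "homog 1 l" and k3: "k < 3" and lk: "l (ev k) \<noteq> 0" and i1: "i \<ge> 1"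
  shows "hilb G i + VS.dim (Usp k l G i) = (i + 1) + hilb (act l G) (i - 1)"
proof -
  let ?X = "(\<lambda>t. act t G) ` Tsp k i"
  let ?W = "img (act l G) (i - 1)"
  let ?V = "img G i"
  let ?U = "Usp k l G i"
  have fl: "finite (supp3 l)" using homog_finite[OF hl] .
  have sX: "VS.subspace ?X" by (rule img_Tsp_subspace)
  have sW: "VS.subspace ?W" by (rule img_subspace)
  have sV: "VS.subspace ?V" by (rule img_subspace)
  have XV: "?X \<subseteq> ?V" unfolding img_def using Tsp_graded by blast
  have WV: "?W \<subseteq> ?V"
  proof
    fix y assume "y \<in> ?W"
    then obtain u where u: "u \<in> graded (i - 1)" "y = act u (act l G)" unfolding img_def by blast
    have "y = act (pmul u l) G" using u(2) act_pmul[OF homog_graded_finite[OF u(1)] fl] by simp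
    moreover have "pmul u l \<in> graded i" using pmul_graded[OF u(1) hl] i1 by simp
    ultimately show "y \<in> ?V" unfolding img_def by blast
  qed
  have Veq: "{x + y |x y. x \<in> ?X \<and> y \<in> ?W} = ?V"
  proof
    show "{x + y |x y. x \<in> ?X \<and> y \<in> ?W} \<subseteq> ?V"
      using XV WV VS.subspace_add[OF sV] by blast
    show "?V \<subseteq> {x + y |x y. x \<in> ?X \<and> y \<in> ?W}"
    proof
      fix v assume "v \<in> ?V"
      then obtain f where "f \<in> graded i" "v = act f G" unfolding img_def by blast
      then show "v \<in> {x + y |x y. x \<in> ?X \<and> y \<in> ?W}" using decomp[OF hl k3 lk i1] by blast
    qed
  qed
  have gr: "VS.dim ?V + VS.dim (?X \<inter> ?W) = VS.dim ?X + VS.dim ?W"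
    using VS.grassmann[OF sX sW] Veq img_fdim[of G i] by simp
  have XL: "?X = Lmap G i ` Tsp k i" using Tsp_Lmap by (metis (no_types, lifting) image_cong)
  have rnT: "VS.dim (Tsp k i :: 'k poly3 set) = VS.dim {v\<in>Tsp k i. Lmap G i v = 0} + VS.dim (Lmap G i ` Tsp k i)"
    by (rule VS.rank_nullity_fd[OF Lmap_add Lmap_scale Tsp_subspace Tsp_fdim])
  have rnU: "VS.dim ?U = VS.dim {v\<in>?U. Lmap G i v = 0} + VS.dim (Lmap G i ` ?U)"
    by (rule VS.rank_nullity_fd[OF Lmap_add Lmap_scale Usp_subspace Usp_fdim])
  have K: "{v\<in>?U. Lmap G i v = 0} = {v\<in>Tsp k i. Lmap G i v = 0}"
  proof
    show "{v\<in>?U. Lmap G i v = 0} \<subseteq> {v\<in>Tsp k i. Lmap G i v = 0}" using Usp_Tsp by blast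
    show "{v\<in>Tsp k i. Lmap G i v = 0} \<subseteq> {v\<in>?U. Lmap G i v = 0}"
    proof
      fix v assume v: "v \<in> {v\<in>Tsp k i. Lmap G i v = 0}"
      then have "act v G = 0" using Tsp_Lmap by fastforce
      then have "act v G \<in> ?W" using VS.subspace_0[OF sW] by simp
      then show "v \<in> {v\<in>?U. Lmap G i v = 0}" using v unfolding Usp_def by blast
    qed
  qed
  have LU: "Lmap G i ` ?U = ?X \<inter> ?W"
  proof
    show "Lmap G i ` ?U \<subseteq> ?X \<inter> ?W"
    proof
      fix w assume "w \<in> Lmap G i ` ?U"
      then obtain t where t: "t \<in> ?U" "w = Lmap G i t" by blast
      then have "t \<in> Tsp k i" "act t G \<in> ?W" unfolding Usp_def by auto
      then show "w \<in> ?X \<inter> ?W" using t(2) Tsp_Lmap by fastforce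
    qed
    show "?X \<inter> ?W \<subseteq> Lmap G i ` ?U"
    proof
      fix w assume w: "w \<in> ?X \<inter> ?W"
      then obtain t where t: "t \<in> Tsp k i" "w = act t G" by blast
      then have "t \<in> ?U" using w unfolding Usp_def by blast
      moreover have "Lmap G i t = w" using Tsp_Lmap[OF t(1), of G] t(2) by simp
      ultimately show "w \<in> Lmap G i ` ?U" by blast
    qed
  qed
  have dT: "VS.dim (Tsp k i :: 'k poly3 set) = i + 1" by (rule dim_Tsp[OF k3])
  show ?thesis unfolding hilb_img dim3_VS
    using gr rnT rnU K LU XL dT by simp
qed


section \<open>Comparison and Macaulay bound\<close>

lemma Tsp_finite: "t \<in> Tsp k i \<Longrightarrow> finite (supp3 t)"
  using homog_graded_finite Tsp_graded by blast

lemma Usp_mono: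
  fixes G l :: "'k::field_char_0 poly3"
  assumes hl: "homog 1 l"
  shows "Usp k l G i \<subseteq> Usp k l (act l G) i"
proof
  fix t assume t: "t \<in> Usp k l G i"
  then have tT: "t \<in> Tsp k i" and "act t G \<in> img (act l G) (i - 1)" unfolding Usp_def by auto
  then obtain u where u: "u \<in> graded (i - 1)" "act t G = act u (act l G)" unfolding img_def by blast
  have fl: "finite (supp3 l)" using homog_finite[OF hl] .
  have ft: "finite (supp3 t)" using Tsp_finite[OF tT] .
  have fu: "finite (supp3 u)" using homog_graded_finite[OF u(1)] .
  have "act t (act l G) = act l (act t G)" by (rule act_comm[OF ft fl])
  also have "\<dots> = act l (act u (act l G))" using u(2) by simp
  also have "\<dots> = act u (act l (act l G))" by (rule act_comm[OF fl fu])
  finally have "act t (act l G) \<in> img (act l (act l G)) (i - 1)" using u(1) unfolding img_def by blast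
  then show "t \<in> Usp k l (act l G) i" using tT unfolding Usp_def by blast
qed

lemma dim_Usp_mono:
  fixes G l :: "'k::field_char_0 poly3"
  assumes hl: "homog 1 l"
  shows "VS.dim (Usp k l G i) \<le> VS.dim (Usp k l (act l G) i)"
  by (rule VS.dim_mono_fd[OF Usp_subspace Usp_fdim Usp_mono[OF hl]])

lemma dim_Usp_le: "k < 3 \<Longrightarrow> VS.dim (Usp k l (G :: 'k::field_char_0 poly3) i) \<le> i + 1"
proof -
  assume k: "k < 3"
  have "VS.dim (Usp k l G i) \<le> VS.dim (Tsp k i :: 'k poly3 set)"
    by (rule VS.dim_mono_fd[OF Tsp_subspace Tsp_fdim Usp_Tsp])
  then show ?thesis using dim_Tsp[OF k, of i, where 'k='k] by simp
qed

lemma homog_mn: "homog (mdeg a) (mn a :: 'k::zero_neq_one poly3)"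
  unfolding homog_def mn_def by auto

lemma sh_hom: "module_hom scale3 scale3 (sh b :: 'k::field poly3 \<Rightarrow> 'k poly3)"
  unfolding module_hom_iff using vs_module[where 'k='k] sh_add[of b] sh_scale[of b] by blast

lemma sh_nz:
  assumes "sh b p c \<noteq> (0 :: 'k::comm_semiring_1)"
  shows "\<exists>a. c = madd b a \<and> p a \<noteq> 0"
proof -
  have "\<exists>a. c = madd b a"
  proof (rule ccontr)
    assume "\<not> (\<exists>a. c = madd b a)"
    then have "\<And>a. c \<noteq> madd b a" by blast
    then have "sh b p c = 0" unfolding sh_def by (rule pmul_mn_off)
    then show False using assms by simp
  qed
  then obtain a where a: "c = madd b a" by blast
  then have "p a \<noteq> 0" using assms unfolding sh_def by (simp add: pmul_mn_at)
  then show ?thesis using a by blast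
qed

lemma sh_Usp:
  fixes G l :: "'k::field_char_0 poly3"
  assumes hl: "homog 1 l" and k3: "k < 3" and j3: "j < 3" and jk: "j \<noteq> k" and i1: "i \<ge> 1"
    and t: "t \<in> Usp k l G i"
  shows "sh (ev j) t \<in> Usp k l G (i + 1)"
proof -
  have tT: "t \<in> Tsp k i" and "act t G \<in> img (act l G) (i - 1)" using t unfolding Usp_def by auto
  then obtain u where u: "u \<in> graded (i - 1)" "act t G = act u (act l G)" unfolding img_def by blast
  have ft: "finite (supp3 t)" using Tsp_finite[OF tT] .
  have fu: "finite (supp3 u)" using homog_graded_finite[OF u(1)] .
  have ht: "homog i t" using tT unfolding Tsp_def by blast
  have hsh: "homog (i + 1) (sh (ev j) t)"
  proof -
    have "homog 1 (mn (ev j) :: 'k poly3)" using homog_mn[of "ev j"] by simp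
    from homog_pmul[OF this ht] show ?thesis unfolding sh_def by simp
  qed
  have csh: "\<forall>c. sh (ev j) t c \<noteq> 0 \<longrightarrow> comp k c = 0"
  proof (intro allI impI)
    fix c assume "sh (ev j) t c \<noteq> 0"
    then obtain a where a: "c = madd (ev j) a" "t a \<noteq> 0" using sh_nz by blast
    have "comp k a = 0" using tT a(2) unfolding Tsp_def by blast
    then show "comp k c = 0" using a(1) comp_ev[OF k3 j3] jk by simp
  qed
  have shT: "sh (ev j) t \<in> Tsp k (i + 1)" using hsh csh unfolding Tsp_def by blast
  have "act (sh (ev j) t) G = act (mn (ev j)) (act t G)"
    unfolding sh_def by (rule act_pmul[OF finite_supp_mn ft])
  also have "\<dots> = act (mn (ev j)) (act u (act l G))" using u(2) by simp
  also have "\<dots> = act (pmul (mn (ev j)) u) (act l G)"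
    by (rule act_pmul[OF finite_supp_mn fu, symmetric])
  finally have e: "act (sh (ev j) t) G = act (pmul (mn (ev j)) u) (act l G)" .
  have "homog 1 (mn (ev j) :: 'k poly3)" using homog_mn[of "ev j"] by simp
  then have "pmul (mn (ev j)) u \<in> graded (1 + (i - 1))"
    using homog_pmul u(1) unfolding graded_def by blast
  then have "pmul (mn (ev j)) u \<in> graded (i + 1 - 1)" using i1 by simp
  then have "act (sh (ev j) t) G \<in> img (act l G) (i + 1 - 1)" using e unfolding img_def by blast
  then show ?thesis using shT unfolding Usp_def by blast
qed

lemma macaulay:
  fixes G l :: "'k::field_char_0 poly3"
  assumes hl: "homog 1 l" and k3: "k < 3" and i1: "i \<ge> 1"
    and d1: "VS.dim (Usp k l G i) \<ge> 1"
  shows "VS.dim (Usp k l G (i + 1)) \<ge> VS.dim (Usp k l G i) + 1"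
proof -
  define k1 where "k1 = (if k = 0 then 1 else (0::nat))"
  define k2 where "k2 = (if k = 2 then 1 else (2::nat))"
  have k13: "k1 < 3" and k23: "k2 < 3" unfolding k1_def k2_def by auto
  have k1k: "k1 \<noteq> k" and k2k: "k2 \<noteq> k" and k12: "k1 \<noteq> k2" unfolding k1_def k2_def using k3 by auto
  let ?U = "Usp k l G i"
  let ?U' = "Usp k l G (i + 1)"
  let ?s1 = "sh (ev k1) :: 'k poly3 \<Rightarrow> 'k poly3"
  let ?s2 = "sh (ev k2) :: 'k poly3 \<Rightarrow> 'k poly3"
  interpret S1: module_hom scale3 scale3 ?s1 by (rule sh_hom)
  let ?M = "?s1 ` ?U"
  have MU': "?M \<subseteq> ?U'" using sh_Usp[OF hl k3 k13 k1k i1] by blast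
  have sM: "VS.subspace ?M" by (rule S1.subspace_image[OF Usp_subspace])
  have dM: "VS.dim ?M = VS.dim ?U"
  proof -
    have rn: "VS.dim ?U = VS.dim {v\<in>?U. ?s1 v = 0} + VS.dim (?s1 ` ?U)"
      by (rule VS.rank_nullity_fd[OF sh_add sh_scale Usp_subspace Usp_fdim])
    have "{v\<in>?U. ?s1 v = 0} \<subseteq> VS.span {}"
    proof
      fix v assume "v \<in> {v\<in>?U. ?s1 v = 0}"
      then have "?s1 v = 0" by blast
      then have "v = 0" by (rule sh_inj)
      then show "v \<in> VS.span {}" by simp
    qed
    from VS.dim_le_card[OF this] have "VS.dim {v\<in>?U. ?s1 v = 0} = 0" by simp
    then show ?thesis using rn by simp
  qed
  have nz: "\<exists>t\<in>?U. t \<noteq> 0"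
  proof (rule ccontr)
    assume "\<not> ?thesis"
    then have "?U \<subseteq> VS.span {}" by auto
    from VS.dim_le_card[OF this] show False using d1 by simp
  qed
  have ex: "\<exists>t\<in>?U. ?s2 t \<notin> ?M"
  proof (rule ccontr)
    assume "\<not> ?thesis"
    then have all: "\<And>t. t \<in> ?U \<Longrightarrow> ?s2 t \<in> ?M" by blast
    define P where "P n = (\<exists>t\<in>?U. \<exists>b. t b \<noteq> 0 \<and> comp k1 b = n)" for n
    obtain t1 where t1: "t1 \<in> ?U" "t1 \<noteq> 0" using nz by blast
    have "\<exists>b. t1 b \<noteq> 0"
    proof (rule ccontr)
      assume "\<not> (\<exists>b. t1 b \<noteq> 0)"
      then have "t1 = 0" by (intro ext) (metis zero_fun_apply)
      then show False using t1(2) by simp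
    qed
    then obtain b1 where "t1 b1 \<noteq> 0" by blast
    then have "P (comp k1 b1)" unfolding P_def using t1 by blast
    then have "P (LEAST n. P n)" by (rule LeastI)
    then obtain t0 b0 where t0: "t0 \<in> ?U" "t0 b0 \<noteq> 0" "comp k1 b0 = (LEAST n. P n)"
      unfolding P_def by blast
    obtain \<sigma> where \<sigma>: "\<sigma> \<in> ?U" "?s2 t0 = ?s1 \<sigma>" using all[OF t0(1)] by blast
    have "?s2 t0 (madd (ev k2) b0) = t0 b0" unfolding sh_def by (rule pmul_mn_at)
    then have "?s1 \<sigma> (madd (ev k2) b0) \<noteq> 0" using \<sigma>(2) t0(2) by simp
    then obtain a where a: "madd (ev k2) b0 = madd (ev k1) a" "\<sigma> a \<noteq> 0" using sh_nz by blast
    have "comp k1 (madd (ev k2) b0) = comp k1 (madd (ev k1) a)" using a(1) by simp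
    then have "comp k1 b0 = comp k1 a + 1" using comp_ev[OF k13 k23] comp_ev[OF k13 k13] k12 by simp
    then have lt: "comp k1 a < (LEAST n. P n)" using t0(3) by simp
    have "P (comp k1 a)" unfolding P_def using \<sigma>(1) a(2) by blast
    then show False using not_less_Least[OF lt] by blast
  qed
  then obtain t where t: "t \<in> ?U" "?s2 t \<notin> ?M" by blast
  have wU': "?s2 t \<in> ?U'" by (rule sh_Usp[OF hl k3 k23 k2k i1 t(1)])
  have "VS.dim ?M < VS.dim ?U'"
    by (rule VS.dim_lt_fd[OF Usp_subspace Usp_fdim sM MU' wU' t(2)])
  then show ?thesis using dM by simp
qed

definition macf :: "(nat \<Rightarrow> nat) \<Rightarrow> bool" where
  "macf q \<longleftrightarrow> (\<forall>i\<ge>1. q i \<le> i + 1) \<and> (\<forall>i\<ge>1. q i \<le> i \<longrightarrow> q (Suc i) \<le> q i)"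

lemma mac_mono:
  assumes "macf q" "1 \<le> j" "q j \<le> j" "j \<le> n"
  shows "q n \<le> q j"
  using assms(4)
proof (induction n rule: dec_induct)
  case base then show ?case by simp
next
  case (step n)
  then have "q n \<le> n" using assms(3) by linarith
  then have "q (Suc n) \<le> q n" using assms(1) step(1) assms(2) unfolding macf_def by auto
  then show ?case using step by linarith
qed

lemma mac_full:
  assumes "macf q" "1 \<le> i" "i \<le> n" "i < q n"
  shows "q i = i + 1"
proof (rule ccontr)
  assume "q i \<noteq> i + 1"
  then have "q i \<le> i" using assms(1,2) unfolding macf_def by force
  then have "q n \<le> q i" using mac_mono[OF assms(1,2) _ assms(3)] by blast
  then show False using assms(4) \<open>q i \<le> i\<close> by linarith
qed

lemma mac_bnd: "macf q \<Longrightarrow> 1 \<le> i \<Longrightarrow> q i \<le> i + 1"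
  unfolding macf_def by blast

locale hf =
  fixes A B C qa qb qc :: "nat \<Rightarrow> nat" and m :: nat
  assumes m1: "m \<ge> 1"
    and A0: "A 0 = 1" and B0: "B 0 = 1" and C0: "C 0 = 1"
    and relA: "\<And>i. i \<ge> 1 \<Longrightarrow> A i = qa i"
    and relB: "\<And>i. i \<ge> 1 \<Longrightarrow> B i = qb i + A (i - 1)"
    and relC: "\<And>i. i \<ge> 1 \<Longrightarrow> C i = qc i + B (i - 1)"
    and ma: "macf qa" and mb: "macf qb" and mc: "macf qc"
    and cmp: "\<And>i. i \<ge> 1 \<Longrightarrow> qb i \<le> qc i"
    and symA: "\<And>i. i \<le> 2*m - 2 \<Longrightarrow> A i = A (2*m - 2 - i)"
    and symB: "\<And>i. i \<le> 2*m - 1 \<Longrightarrow> B i = B (2*m - 1 - i)"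
    and symC: "\<And>i. i \<le> 2*m \<Longrightarrow> C i = C (2*m - i)"
begin

lemma A_full: "r = A (m - 1) \<Longrightarrow> i < r \<Longrightarrow> i \<le> m - 1 \<Longrightarrow> A i = i + 1"
proof -
  assume r: "r = A (m - 1)" and ir: "i < r" and im: "i \<le> m - 1"
  show "A i = i + 1"
  proof (cases "i = 0")
    case True then show ?thesis using A0 by simp
  next
    case False
    then have "m - 1 \<ge> 1" using im by linarith
    then have "qa (m - 1) = r" using r relA by simp
    then show ?thesis using mac_full[OF ma, of i "m - 1"] False im ir relA by simp
  qed
qed

lemma A_shape:
  assumes r: "r = A (m - 1)" and r1: "1 \<le> r" and rm: "r \<le> m - 1"
  shows "\<forall>i. r \<le> i \<and> i \<le> m - 1 \<longrightarrow> A i = r"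
    and "\<forall>i. r \<le> i \<and> i \<le> 2*m - 2 \<longrightarrow> A i \<le> r"
    and "\<forall>i i'. r \<le> i \<and> i \<le> i' \<and> i' \<le> 2*m - 2 \<longrightarrow> A i' \<le> A i"
proof -
  have m2: "m - 1 \<ge> 1" using r1 rm by linarith
  have qm: "qa (m - 1) = r" using r relA m2 by simp
  define P where "P j = (1 \<le> j \<and> qa j \<le> j)" for j
  have Pm: "P (m - 1)" unfolding P_def using qm rm m2 by simp
  define j0 where "j0 = (LEAST j. P j)"
  have Pj0: "P j0" unfolding j0_def by (rule LeastI[of P, OF Pm])
  have j0m: "j0 \<le> m - 1" unfolding j0_def by (rule Least_le[of P, OF Pm])
  have j01: "1 \<le> j0" and qj0: "qa j0 \<le> j0" using Pj0 unfolding P_def by auto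
  have below: "A i = i + 1" if "i < j0" for i
  proof (cases "i = 0")
    case True then show ?thesis using A0 by simp
  next
    case False
    have "\<not> P i" using that unfolding j0_def by (rule not_less_Least)
    then have "qa i > i" using False unfolding P_def by auto
    then show ?thesis using mac_bnd[OF ma, of i] False relA by simp
  qed
  have monoA: "A i' \<le> A i" if "j0 \<le> i" "i \<le> i'" for i i'
  proof -
    have "qa i \<le> qa j0" using mac_mono[OF ma j01 qj0 that(1)] .
    then have "qa i \<le> i" using qj0 that by linarith
    then have "qa i' \<le> qa i" using mac_mono[OF ma _ _ that(2)] j01 that by linarith
    then show ?thesis using relA j01 that by simp
  qed
  have "r \<le> j0"
  proof -
    have "A (m - 1) \<le> A j0" using monoA[OF order_refl j0m] .
    then show ?thesis using r relA j01 qj0 by simp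
  qed
  moreover have "j0 \<le> r"
  proof -
    have "A (j0 - 1) = j0" using below[of "j0 - 1"] j01 by simp
    moreover have "j0 - 1 \<le> 2*m - 2" using j0m by linarith
    ultimately have "A (2*m - 2 - (j0 - 1)) = j0" using symA[of "j0 - 1"] by simp
    moreover have "2*m - 2 - (j0 - 1) \<ge> m - 1" using j0m by linarith
    ultimately have "j0 \<le> A (m - 1)" using monoA[of "m - 1" "2*m - 2 - (j0 - 1)"] j0m by simp
    then show ?thesis using r by simp
  qed
  ultimately have rj0: "r = j0" by simp
  show "\<forall>i. r \<le> i \<and> i \<le> m - 1 \<longrightarrow> A i = r"
  proof (intro allI impI)
    fix i assume i: "r \<le> i \<and> i \<le> m - 1"
    have "A i \<le> A r" using monoA i rj0 by simp
    moreover have "A r = r"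
    proof -
      have "A (m - 1) \<le> A r" using monoA i rj0 by simp
      moreover have "A r \<le> r" using relA rj0 qj0 j01 by simp
      ultimately show ?thesis using r by simp
    qed
    moreover have "A (m - 1) \<le> A i" using monoA i rj0 by simp
    ultimately show "A i = r" using r by simp
  qed
  show "\<forall>i. r \<le> i \<and> i \<le> 2*m - 2 \<longrightarrow> A i \<le> r"
  proof (intro allI impI)
    fix i assume i: "r \<le> i \<and> i \<le> 2*m - 2"
    have "A i \<le> A r" using monoA i rj0 by simp
    moreover have "A r \<le> r" using relA rj0 qj0 j01 by simp
    ultimately show "A i \<le> r" by simp
  qed
  show "\<forall>i i'. r \<le> i \<and> i \<le> i' \<and> i' \<le> 2*m - 2 \<longrightarrow> A i' \<le> A i"
    using monoA rj0 by blast
qed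


context
  fixes r s t :: nat
  assumes r: "r = A (m - 1)" and s: "s = B (m - 1)" and t: "t = C m"
    and m2: "m \<ge> 2" and r1: "1 \<le> r" and rm: "r \<le> m - 1" and s1: "2 * r \<le> s"
    and s2: "s \<le> m + r" and t1: "2 * s \<le> t + r" and t2: "t \<le> m + s + 1"
begin

lemma Ar: "r \<le> i \<Longrightarrow> i \<le> m - 1 \<Longrightarrow> A i = r"
  using A_shape(1)[OF r r1 rm] by blast

lemma Alow: "i \<le> r - 1 \<Longrightarrow> A i = i + 1"
  using A_full[OF r, of i] r1 rm by linarith

lemma Ar': "r \<le> i + 1 \<Longrightarrow> i \<le> m - 1 \<Longrightarrow> A i = r"
proof -
  assume h: "r \<le> i + 1" "i \<le> m - 1"
  show "A i = r"
  proof (cases "r \<le> i")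
    case True then show ?thesis using Ar h by blast
  next
    case False then have "i = r - 1" using h by linarith
    then show ?thesis using Alow r1 by simp
  qed
qed

lemma Amono: "r \<le> i \<Longrightarrow> i \<le> i' \<Longrightarrow> i' \<le> 2*m - 2 \<Longrightarrow> A i' \<le> A i"
  using A_shape(3)[OF r r1 rm] by blast

lemma qbm1: "qb (m - 1) = s - r"
proof -
  have "B (m - 1) = qb (m - 1) + A (m - 1 - 1)" using relB m2 by simp
  moreover have "A (m - 1 - 1) = r" using Ar'[of "m - 1 - 1"] rm m2 by simp
  ultimately show ?thesis using s by simp
qed

lemma Bm: "B m = s"
  using symB[of m] m2 s by (simp add: numeral_2_eq_2)

lemma qbm: "qb m = s - r"
proof -
  have "B m = qb m + A (m - 1)" using relB m2 by simp
  then show ?thesis using Bm r by simp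
qed

lemma qb_dec: "m \<le> i \<Longrightarrow> i \<le> i' \<Longrightarrow> qb i' \<le> qb i"
proof -
  assume h: "m \<le> i" "i \<le> i'"
  have "qb m \<le> m" using qbm s2 by simp
  then have "qb i \<le> qb m" using mac_mono[OF mb _ _ h(1)] m2 by simp
  then have "qb i \<le> i" using \<open>qb m \<le> m\<close> h by linarith
  then show ?thesis using mac_mono[OF mb _ _ h(2)] h m2 by simp
qed

lemma Bdec: "m - 1 \<le> i \<Longrightarrow> i \<le> i' \<Longrightarrow> i' \<le> 2*m - 1 \<Longrightarrow> B i' \<le> B i"
proof -
  assume h: "m - 1 \<le> i" "i \<le> i'" "i' \<le> 2*m - 1"
  show ?thesis
  proof (cases "i = m - 1")
    case True
    then have "B i = B m" using Bm s by simp
    moreover have "B i' \<le> B m" if "m \<le> i'"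
    proof -
      have "qb i' \<le> qb m" using qb_dec[OF order_refl that] .
      moreover have "A (i' - 1) \<le> A (m - 1)" using Amono[of "m - 1" "i' - 1"] rm that h by linarith
      ultimately show ?thesis using relB[of i'] relB[of m] m2 that by simp
    qed
    moreover have "i' = m - 1 \<or> m \<le> i'" using h True by linarith
    ultimately show ?thesis using True by auto
  next
    case False
    then have mi: "m \<le> i" using h by linarith
    have "qb i' \<le> qb i" using qb_dec[OF mi h(2)] .
    moreover have "A (i' - 1) \<le> A (i - 1)" using Amono[of "i - 1" "i' - 1"] rm mi h by linarith
    ultimately show ?thesis using relB[of i'] relB[of i] mi h m2 by simp
  qed
qed

lemma Binc: "i \<le> i' \<Longrightarrow> i' \<le> m - 1 \<Longrightarrow> B i \<le> B i'"
proof -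
  assume h: "i \<le> i'" "i' \<le> m - 1"
  have "i \<le> 2*m - 1" "i' \<le> 2*m - 1" using h m2 by linarith+
  then have "B i = B (2*m - 1 - i)" "B i' = B (2*m - 1 - i')" using symB by blast+
  moreover have "B (2*m - 1 - i) \<le> B (2*m - 1 - i')" using Bdec[of "2*m - 1 - i'" "2*m - 1 - i"] h m2 by simp
  ultimately show ?thesis by simp
qed

lemma qb_full: "1 \<le> i \<Longrightarrow> i < s - r \<Longrightarrow> qb i = i + 1"
  using mac_full[OF mb, of i m] qbm s2 by simp

lemma qb_const: "s - r \<le> i \<Longrightarrow> i \<le> m - 1 \<Longrightarrow> qb i = s - r"
proof -
  assume h: "s - r \<le> i" "i \<le> m - 1"
  have i1: "1 \<le> i" "r \<le> i" using h s1 r1 by linarith+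
  have "B i = qb i + A (i - 1)" using relB i1 by simp
  moreover have "A (i - 1) = r" using Ar'[of "i - 1"] i1 h by simp
  moreover have "B i \<le> s" using Binc[OF h(2) order_refl] s by simp
  ultimately have "qb i \<le> s - r" by simp
  then have "qb i \<le> i" using h by linarith
  then have "qb m \<le> qb i" using mac_mono[OF mb i1(1)] h by simp
  then show ?thesis using qbm \<open>qb i \<le> s - r\<close> by simp
qed

lemma b1: "i \<le> r - 1 \<Longrightarrow> B i = 2 * i + 1"
proof (cases "i = 0")
  case True then show ?thesis using B0 by simp
next
  case False
  assume h: "i \<le> r - 1"
  then have "qb i = i + 1" using qb_full[of i] False s1 r1 by linarith
  moreover have "A (i - 1) = i" using Alow[of "i - 1"] h False by simp
  ultimately show ?thesis using relB[of i] False by simp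
qed

lemma b2: "r \<le> i \<Longrightarrow> i + r + 1 \<le> s \<Longrightarrow> B i = i + r + 1"
proof -
  assume h: "r \<le> i" "i + r + 1 \<le> s"
  have i1: "1 \<le> i" using h r1 by linarith
  have "qb i = i + 1" using qb_full[of i] i1 h by linarith
  moreover have "A (i - 1) = r" using Ar'[of "i - 1"] h s2 i1 by linarith
  ultimately show ?thesis using relB[of i] i1 by simp
qed

lemma b3: "s \<le> i + r \<Longrightarrow> i \<le> m - 1 \<Longrightarrow> B i = s"
proof -
  assume h: "s \<le> i + r" "i \<le> m - 1"
  have i1: "1 \<le> i" "r \<le> i" using h s1 r1 by linarith+
  have "qb i = s - r" using qb_const[of i] h by linarith
  moreover have "A (i - 1) = r" using Ar'[of "i - 1"] i1 h by simp
  ultimately show ?thesis using relB[of i] i1 s1 by simp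
qed

lemma qcm: "qc m = t - s"
  using relC[of m] m2 t s by simp

lemma qc_full: "1 \<le> i \<Longrightarrow> i < t - s \<Longrightarrow> i \<le> m \<Longrightarrow> qc i = i + 1"
  using mac_full[OF mc, of i m] qcm by simp

lemma Cstuff:
  assumes um: "t - s \<le> m"
  shows "\<And>i i'. i \<le> i' \<Longrightarrow> i' \<le> m \<Longrightarrow> C i \<le> C i'"
    and "\<And>i. m \<le> i \<Longrightarrow> qc i \<le> t - s"
proof -
  have qcm_le: "qc m \<le> m" using qcm um by simp
  have qc_dec: "qc i' \<le> qc i" if "m \<le> i" "i \<le> i'" for i i'
  proof -
    have "qc i \<le> qc m" using mac_mono[OF mc _ qcm_le that(1)] m2 by simp
    then have "qc i \<le> i" using qcm_le that by linarith
    then show ?thesis using mac_mono[OF mc _ _ that(2)] that m2 by simp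
  qed
  have Cdec: "C i' \<le> C i" if "m \<le> i" "i \<le> i'" "i' \<le> 2*m" for i i'
  proof -
    have "qc i' \<le> qc i" using qc_dec that by blast
    moreover have "B (i' - 1) \<le> B (i - 1)" using Bdec[of "i - 1" "i' - 1"] that m2 by linarith
    ultimately show ?thesis using relC[of i] relC[of i'] that m2 by simp
  qed
  show "C i \<le> C i'" if "i \<le> i'" "i' \<le> m" for i i'
  proof -
    have "i \<le> 2*m" "i' \<le> 2*m" using that by linarith+
    then have "C i = C (2*m - i)" "C i' = C (2*m - i')" using symC by blast+
    moreover have "C (2*m - i) \<le> C (2*m - i')" using Cdec[of "2*m - i'" "2*m - i"] that by simp
    ultimately show ?thesis by simp
  qed
  show "qc i \<le> t - s" if "m \<le> i" for i using qc_dec[OF order_refl that] qcm by simp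
qed

lemma qc_const_gen:
  assumes um: "t - s \<le> m" and i: "t - s \<le> i" "i \<le> m" and Bi: "B (i - 1) = s"
  shows "qc i = t - s"
proof -
  have i1: "1 \<le> i" using i t1 s1 r1 by linarith
  have "C i \<le> C m" using Cstuff(1)[OF um i(2) order_refl] .
  then have "qc i + s \<le> qc m + s" using relC[of i] relC[of m] i1 Bi s m2 by simp
  then have "qc i \<le> t - s" using qcm by simp
  then have "qc i \<le> i" using i by linarith
  then have "qc m \<le> qc i" using mac_mono[OF mc i1] i by simp
  then show ?thesis using qcm \<open>qc i \<le> t - s\<close> by simp
qed

lemma part1_AB:
  "(\<forall>i. i \<le> r - 1 \<longrightarrow> A i = i + 1)
    \<and> (\<forall>i. r \<le> i \<and> i \<le> m - 1 \<longrightarrow> A i = r)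
    \<and> (\<forall>i. i \<le> r - 1 \<longrightarrow> B i = 2 * i + 1)
    \<and> (\<forall>i. r \<le> i \<and> i + r + 1 \<le> s \<longrightarrow> B i = i + r + 1)
    \<and> (\<forall>i. s \<le> i + r \<and> i \<le> m - 1 \<longrightarrow> B i = s)"
  using Alow Ar b1 b2 b3 by blast

lemma part1_t3r:
  assumes t3: "t = 3 * r"
  shows "(C 0 = 1
          \<and> (\<forall>i. 1 \<le> i \<and> i \<le> r - 1 \<longrightarrow> C i = 3 * i)
          \<and> (\<forall>i. r \<le> i \<and> i \<le> m \<longrightarrow> C i = 3 * r))
       \<or> (C 0 = 1
          \<and> (\<forall>i. 1 \<le> i \<and> i \<le> r - 1 \<longrightarrow> C i = 3 * i)
          \<and> C r = 3 * r - 1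
          \<and> (\<forall>i. r + 1 \<le> i \<and> i \<le> m \<longrightarrow> C i = 3 * r))"
proof -
  have s2r: "s = 2 * r" using t1 t3 s1 by linarith
  have u: "t - s = r" using s2r t3 by simp
  have um: "t - s \<le> m" using u rm by linarith
  have low: "C i = 3 * i" if "1 \<le> i" "i \<le> r - 1" for i
  proof -
    have "qc i = i + 1" using qc_full[of i] that u rm by linarith
    moreover have "B (i - 1) = 2 * (i - 1) + 1" using b1[of "i - 1"] that by linarith
    ultimately show ?thesis using relC[of i] that by simp
  qed
  have high: "C i = 3 * r" if "r + 1 \<le> i" "i \<le> m" for i
  proof -
    have Bi: "B (i - 1) = s" using b3[of "i - 1"] that s2r by linarith
    have "qc i = r" using qc_const_gen[OF um _ that(2) Bi] u that by simp
    then show ?thesis using relC[of i] that Bi s2r by simp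
  qed
  have Br: "B (r - 1) = 2 * r - 1" using b1[of "r - 1"] r1 by simp
  have Cr: "C r = qc r + (2 * r - 1)" using relC[of r] r1 Br by simp
  have "qc r = r \<or> qc r = r + 1"
  proof (cases "qc r \<le> r")
    case True
    then have "qc m \<le> qc r" using mac_mono[OF mc r1] rm by simp
    then show ?thesis using True qcm u by simp
  next
    case False
    then show ?thesis using mac_bnd[OF mc r1] by simp
  qed
  then show ?thesis
  proof
    assume "qc r = r + 1"
    then have "C r = 3 * r" using Cr r1 by simp
    then have "\<forall>i. r \<le> i \<and> i \<le> m \<longrightarrow> C i = 3 * r" using high by (metis Suc_eq_plus1 le_neq_implies_less less_eq_Suc_le)
    then show ?thesis using low C0 by blast
  next
    assume "qc r = r"
    then have "C r = 3 * r - 1" using Cr r1 by simp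
    then show ?thesis using low high C0 by blast
  qed
qed

lemma part1_tn3r:
  assumes t3: "t \<noteq> 3 * r"
  shows "C 0 = 1
       \<and> (\<forall>i. 1 \<le> i \<and> i \<le> r \<longrightarrow> C i = 3 * i)
       \<and> (\<forall>i. r + 1 \<le> i \<and> i + r + 1 \<le> s \<longrightarrow> C i = 2 * i + r + 1)
       \<and> (t + r > 2 * s \<and> s > 2 * r \<longrightarrow> C (s - r) = 2 * (s - r) + r + 1)
       \<and> (t + r > 2 * s \<and> s = 2 * r \<longrightarrow> C (s - r) = 2 * (s - r) + r)
       \<and> (\<forall>i. s + 1 \<le> i + r \<and> i + s + 1 \<le> t \<longrightarrow> C i = i + s + 1)
       \<and> (\<forall>i. t \<le> i + s \<and> i \<le> m \<longrightarrow> C i = t)"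
proof -
  have ru: "r < t - s" using t3 t1 s1 by linarith
  have c1: "C i = 3 * i" if "1 \<le> i" "i \<le> r" for i
  proof -
    have "qc i = i + 1" using qc_full[of i] that ru rm by linarith
    moreover have "B (i - 1) = 2 * (i - 1) + 1" using b1[of "i - 1"] that by linarith
    ultimately show ?thesis using relC[of i] that by simp
  qed
  have c2: "C i = 2 * i + r + 1" if "r + 1 \<le> i" "i + r + 1 \<le> s" for i
  proof -
    have "qc i = i + 1" using qc_full[of i] that t1 s2 by linarith
    moreover have "B (i - 1) = (i - 1) + r + 1" using b2[of "i - 1"] that by linarith
    ultimately show ?thesis using relC[of i] that by simp
  qed
  have c3: "C (s - r) = 2 * (s - r) + r + 1" if "t + r > 2 * s" "s > 2 * r"
  proof -
    have "qc (s - r) = s - r + 1" using qc_full[of "s - r"] that s2 r1 by linarith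
    moreover have "B (s - r - 1) = s" using b2[of "s - r - 1"] that by linarith
    ultimately show ?thesis using relC[of "s - r"] that by simp
  qed
  have c4: "C (s - r) = 2 * (s - r) + r" if "t + r > 2 * s" "s = 2 * r"
  proof -
    have "qc r = r + 1" using qc_full[of r] that r1 rm by linarith
    moreover have "B (r - 1) = 2 * (r - 1) + 1" using b1[of "r - 1"] by simp
    ultimately show ?thesis using relC[of r] that r1 by simp
  qed
  have c5: "C i = i + s + 1" if "s + 1 \<le> i + r" "i + s + 1 \<le> t" for i
  proof -
    have "qc i = i + 1" using qc_full[of i] that t2 s1 r1 by linarith
    moreover have "B (i - 1) = s" using b3[of "i - 1"] that t2 by linarith
    ultimately show ?thesis using relC[of i] that s1 r1 by simp
  qed
  have c6: "C i = t" if "t \<le> i + s" "i \<le> m" for i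
  proof -
    have um: "t - s \<le> m" using that by linarith
    have Bi: "B (i - 1) = s"
    proof (cases "s \<le> (i - 1) + r")
      case True then show ?thesis using b3[of "i - 1"] that by linarith
    next
      case False
      then have "i = s - r" "s > 2 * r" using that t1 t3 s1 r1 by linarith+
      then show ?thesis using b2[of "i - 1"] by linarith
    qed
    have "qc i = t - s" using qc_const_gen[OF um _ that(2) Bi] that by linarith
    then show ?thesis using relC[of i] Bi that t1 s1 r1 by simp
  qed
  show ?thesis using C0 c1 c2 c3 c4 c5 c6 by blast
qed

end

lemma part2:
  assumes r: "r = A (m - 1)" and s: "s = B (m - 1)" and t: "t = C m"
    and rm: "r = m" and sd: "s = 2 * m - 1"
  shows "(\<forall>i. i \<le> m - 1 \<longrightarrow> A i = i + 1 \<and> B i = 2 * i + 1)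
    \<and> C 0 = 1
    \<and> (\<forall>i. 1 \<le> i \<and> i \<le> m - 1 \<longrightarrow> C i = 3 * i)
    \<and> C m = t"
proof -
  have Ai: "A i = i + 1" if "i \<le> m - 1" for i using A_full[OF r, of i] that rm m1 by linarith
  have qbi: "qb i = i + 1" if "1 \<le> i" "i \<le> m - 1" for i
  proof -
    have "B (m - 1) = qb (m - 1) + A (m - 1 - 1)" using relB that by simp
    moreover have "A (m - 1 - 1) = m - 1" using Ai[of "m - 1 - 1"] that by linarith
    ultimately have "qb (m - 1) = m" using s sd that by linarith
    then show ?thesis using mac_full[OF mb that] that by simp
  qed
  have Bi: "B i = 2 * i + 1" if "i \<le> m - 1" for i
  proof (cases "i = 0")
    case True then show ?thesis using B0 by simp
  next
    case False
    then show ?thesis using relB[of i] qbi[of i] Ai[of "i - 1"] that by simp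
  qed
  have Ci: "C i = 3 * i" if "1 \<le> i" "i \<le> m - 1" for i
  proof -
    have "qc i \<ge> i + 1" using cmp[of i] qbi[OF that] that by simp
    then have "qc i = i + 1" using mac_bnd[OF mc that(1)] by simp
    then show ?thesis using relC[of i] Bi[of "i - 1"] that by simp
  qed
  show ?thesis using Ai Bi C0 Ci t by blast
qed

end

lemma exists_k:
  fixes l :: "'k::field_char_0 poly3"
  assumes hl: "homog 1 l" and nz: "act l H \<noteq> 0"
  shows "\<exists>k<3. l (ev k) \<noteq> 0"
proof (rule ccontr)
  assume "\<not> ?thesis"
  then have z: "\<And>k. k \<in> {0,1,2} \<Longrightarrow> l (ev k) = 0" by auto
  have "l = (\<Sum>k\<in>{0,1,2}. scale3 (l (ev k)) (mn (ev k) :: 'k poly3))" by (rule lin_expand[OF hl])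
  also have "\<dots> = (\<Sum>k\<in>{0,1,2::nat}. (0 :: 'k poly3))"
    by (rule sum.cong[OF refl]) (use z in \<open>auto simp: fun_eq_iff\<close>)
  finally have "l = 0" by simp
  then show False using nz by simp
qed

lemma conj7: "a1 \<and> a2 \<and> a3 \<and> a4 \<and> a5 \<Longrightarrow> (p \<Longrightarrow> x) \<Longrightarrow> (\<not> p \<Longrightarrow> y)
  \<Longrightarrow> a1 \<and> a2 \<and> a3 \<and> a4 \<and> a5 \<and> (p \<longrightarrow> x) \<and> (\<not> p \<longrightarrow> y)"
  by blast

definition qf :: "nat \<Rightarrow> 'k::field_char_0 poly3 \<Rightarrow> 'k poly3 \<Rightarrow> nat \<Rightarrow> nat" where
  "qf k l G i = i + 1 - VS.dim (Usp k l G i)"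

lemma qf_rel:
  fixes G l :: "'k::field_char_0 poly3"
  assumes hl: "homog 1 l" and k3: "k < 3" and lk: "l (ev k) \<noteq> 0" and i1: "i \<ge> 1"
  shows "hilb G i = qf k l G i + hilb (act l G) (i - 1)"
  using qform[OF hl k3 lk i1, of G] dim_Usp_le[OF k3, of l G i] unfolding qf_def by linarith

lemma qf_mac:
  fixes G l :: "'k::field_char_0 poly3"
  assumes hl: "homog 1 l" and k3: "k < 3"
  shows "macf (qf k l G)"
  unfolding macf_def
proof (intro conjI allI impI)
  fix i :: nat assume "1 \<le> i"
  show "qf k l G i \<le> i + 1" unfolding qf_def by simp
next
  fix i :: nat assume i1: "1 \<le> i" and q: "qf k l G i \<le> i"
  have le: "VS.dim (Usp k l G i) \<le> i + 1" by (rule dim_Usp_le[OF k3])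
  have d1: "VS.dim (Usp k l G i) \<ge> 1" using q le unfolding qf_def by linarith
  have "VS.dim (Usp k l G (i + 1)) \<ge> VS.dim (Usp k l G i) + 1" by (rule macaulay[OF hl k3 i1 d1])
  moreover have "VS.dim (Usp k l G (i + 1)) \<le> i + 1 + 1" by (rule dim_Usp_le[OF k3])
  ultimately show "qf k l G (Suc i) \<le> qf k l G i" unfolding qf_def using le by simp
qed

lemma qf_cmp:
  fixes G l :: "'k::field_char_0 poly3"
  assumes hl: "homog 1 l"
  shows "qf k l (act l G) i \<le> qf k l G i"
  using dim_Usp_mono[OF hl, of k G i] unfolding qf_def by linarith


theorem theorem4p2:
  fixes F l :: "'k::field_char_0 poly3" and d m r s t :: nat
  assumes F_poly: "is_poly3 F" and F_nz: "F \<noteq> 0" and F_hom: "homog d F"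
    and d_even: "d = 2 * m" and d_ge: "d \<ge> 2"
    and l_lin: "homog 1 l"
    and l2: "act (ppow l 2) F \<noteq> 0" and l3: "act (ppow l 3) F = 0"
    and r_def: "r = hilb (act (ppow l 2) F) (m - 1)"
    and s_def: "s = hilb (act (ppow l 1) F) (m - 1)"
    and t_def: "t = hilb F m"
  shows
   "(d \<ge> 4 \<and> 1 \<le> r \<and> r \<le> m - 1 \<and> 2 * r \<le> s \<and> s \<le> m + r
        \<and> 2 * s \<le> t + r \<and> t \<le> m + s + 1 \<longrightarrow>
      (\<forall>i. i \<le> r - 1 \<longrightarrow> hilb (act (ppow l 2) F) i = i + 1)
    \<and> (\<forall>i. r \<le> i \<and> i \<le> m - 1 \<longrightarrow> hilb (act (ppow l 2) F) i = r)
    \<and> (\<forall>i. i \<le> r - 1 \<longrightarrow> hilb (act (ppow l 1) F) i = 2 * i + 1)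
    \<and> (\<forall>i. r \<le> i \<and> i + r + 1 \<le> s \<longrightarrow> hilb (act (ppow l 1) F) i = i + r + 1)
    \<and> (\<forall>i. s \<le> i + r \<and> i \<le> m - 1 \<longrightarrow> hilb (act (ppow l 1) F) i = s)
    \<and> (t = 3 * r \<longrightarrow>
         (hilb F 0 = 1
          \<and> (\<forall>i. 1 \<le> i \<and> i \<le> r - 1 \<longrightarrow> hilb F i = 3 * i)
          \<and> (\<forall>i. r \<le> i \<and> i \<le> m \<longrightarrow> hilb F i = 3 * r))
       \<or> (hilb F 0 = 1
          \<and> (\<forall>i. 1 \<le> i \<and> i \<le> r - 1 \<longrightarrow> hilb F i = 3 * i)
          \<and> hilb F r = 3 * r - 1
          \<and> (\<forall>i. r + 1 \<le> i \<and> i \<le> m \<longrightarrow> hilb F i = 3 * r)))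
    \<and> (t \<noteq> 3 * r \<longrightarrow>
         hilb F 0 = 1
       \<and> (\<forall>i. 1 \<le> i \<and> i \<le> r \<longrightarrow> hilb F i = 3 * i)
       \<and> (\<forall>i. r + 1 \<le> i \<and> i + r + 1 \<le> s \<longrightarrow> hilb F i = 2 * i + r + 1)
       \<and> (t + r > 2 * s \<and> s > 2 * r \<longrightarrow> hilb F (s - r) = 2 * (s - r) + r + 1)
       \<and> (t + r > 2 * s \<and> s = 2 * r \<longrightarrow> hilb F (s - r) = 2 * (s - r) + r)
       \<and> (\<forall>i. s + 1 \<le> i + r \<and> i + s + 1 \<le> t \<longrightarrow> hilb F i = i + s + 1)
       \<and> (\<forall>i. t \<le> i + s \<and> i \<le> m \<longrightarrow> hilb F i = t)))
  \<and> (r = m \<and> s = d - 1 \<and> 3 * m \<le> t + 2 \<and> t \<le> 3 * m \<longrightarrow>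
      (\<forall>i. i \<le> m - 1 \<longrightarrow> hilb (act (ppow l 2) F) i = i + 1
                         \<and> hilb (act (ppow l 1) F) i = 2 * i + 1)
    \<and> hilb F 0 = 1
    \<and> (\<forall>i. 1 \<le> i \<and> i \<le> m - 1 \<longrightarrow> hilb F i = 3 * i)
    \<and> hilb F m = t)"
proof -
  have hl: "homog 1 l" by (rule l_lin)
  define F1 where "F1 = act l F"
  define F2 where "F2 = act l F1"
  have e1: "act (ppow l 1) F = F1" unfolding F1_def by (rule act_ppow1[OF hl])
  have e2: "act (ppow l 2) F = F2" unfolding F2_def F1_def by (rule act_ppow2[OF hl])
  have e3: "act l F2 = 0" using l3 act_ppow3[OF hl, of F] unfolding F2_def F1_def by simp
  have F2nz: "F2 \<noteq> 0" using l2 e2 by simp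
  have F1nz: "F1 \<noteq> 0" using F2nz unfolding F2_def by auto
  obtain k where k3: "k < 3" and lk: "l (ev k) \<noteq> 0"
    using exists_k[OF hl, of F1] F2nz unfolding F2_def by blast
  have m1: "m \<ge> 1" using d_even d_ge by simp
  have hF1: "homog (d - 1) F1" unfolding F1_def by (rule homog_act[OF hl F_hom])
  have hF2: "homog (d - 1 - 1) F2" unfolding F2_def by (rule homog_act[OF hl hF1])
  interpret H: hf "hilb (act (ppow l 2) F)" "hilb (act (ppow l 1) F)" "hilb F"
    "qf k l F2" "qf k l F1" "qf k l F" m
  proof
    show "1 \<le> m" by (rule m1)
    show "hilb (act (ppow l 2) F) 0 = 1" unfolding e2 by (rule hilb_at0[OF F2nz])
    show "hilb (act (ppow l 1) F) 0 = 1" unfolding e1 by (rule hilb_at0[OF F1nz])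
    show "hilb F 0 = 1" by (rule hilb_at0[OF F_nz])
    fix i :: nat assume i1: "1 \<le> i"
    show "hilb (act (ppow l 2) F) i = qf k l F2 i"
      unfolding e2 using qf_rel[OF hl k3 lk i1, of F2] e3 hilb_zero by simp
    show "hilb (act (ppow l 1) F) i = qf k l F1 i + hilb (act (ppow l 2) F) (i - 1)"
      unfolding e1 e2 using qf_rel[OF hl k3 lk i1, of F1] unfolding F2_def by simp
    show "hilb F i = qf k l F i + hilb (act (ppow l 1) F) (i - 1)"
      unfolding e1 using qf_rel[OF hl k3 lk i1, of F] unfolding F1_def by simp
    show "qf k l F1 i \<le> qf k l F i" unfolding F1_def by (rule qf_cmp[OF hl])
  next
    show "macf (qf k l F2)" by (rule qf_mac[OF hl k3])
    show "macf (qf k l F1)" by (rule qf_mac[OF hl k3])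
    show "macf (qf k l F)" by (rule qf_mac[OF hl k3])
  next
    fix i :: nat assume "i \<le> 2 * m - 2"
    then have "i \<le> d - 1 - 1" using d_even by simp
    from hilb_sym[OF hF2 this] show "hilb (act (ppow l 2) F) i = hilb (act (ppow l 2) F) (2 * m - 2 - i)"
      unfolding e2 using d_even by (simp add: numeral_2_eq_2)
  next
    fix i :: nat assume "i \<le> 2 * m - 1"
    then have "i \<le> d - 1" using d_even by simp
    from hilb_sym[OF hF1 this] show "hilb (act (ppow l 1) F) i = hilb (act (ppow l 1) F) (2 * m - 1 - i)"
      unfolding e1 using d_even by simp
  next
    fix i :: nat assume "i \<le> 2 * m"
    then have "i \<le> d" using d_even by simp
    from hilb_sym[OF F_hom this] show "hilb F i = hilb F (2 * m - i)"
      using d_even by simp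
  qed
  show ?thesis
  proof (rule conjI; rule impI)
    assume hyp: "d \<ge> 4 \<and> 1 \<le> r \<and> r \<le> m - 1 \<and> 2 * r \<le> s \<and> s \<le> m + r
        \<and> 2 * s \<le> t + r \<and> t \<le> m + s + 1"
    have m2: "2 \<le> m" using hyp d_even by simp
    have h: "1 \<le> r" "r \<le> m - 1" "2 * r \<le> s" "s \<le> m + r" "2 * s \<le> t + r" "t \<le> m + s + 1"
      using hyp by auto
    note AB = H.part1_AB[OF r_def s_def t_def m2 h]
    note T3 = H.part1_t3r[OF r_def s_def t_def m2 h]
    note TN = H.part1_tn3r[OF r_def s_def t_def m2 h]
    show "(\<forall>i. i \<le> r - 1 \<longrightarrow> hilb (act (ppow l 2) F) i = i + 1)
    \<and> (\<forall>i. r \<le> i \<and> i \<le> m - 1 \<longrightarrow> hilb (act (ppow l 2) F) i = r)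
    \<and> (\<forall>i. i \<le> r - 1 \<longrightarrow> hilb (act (ppow l 1) F) i = 2 * i + 1)
    \<and> (\<forall>i. r \<le> i \<and> i + r + 1 \<le> s \<longrightarrow> hilb (act (ppow l 1) F) i = i + r + 1)
    \<and> (\<forall>i. s \<le> i + r \<and> i \<le> m - 1 \<longrightarrow> hilb (act (ppow l 1) F) i = s)
    \<and> (t = 3 * r \<longrightarrow>
         (hilb F 0 = 1
          \<and> (\<forall>i. 1 \<le> i \<and> i \<le> r - 1 \<longrightarrow> hilb F i = 3 * i)
          \<and> (\<forall>i. r \<le> i \<and> i \<le> m \<longrightarrow> hilb F i = 3 * r))
       \<or> (hilb F 0 = 1
          \<and> (\<forall>i. 1 \<le> i \<and> i \<le> r - 1 \<longrightarrow> hilb F i = 3 * i)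
          \<and> hilb F r = 3 * r - 1
          \<and> (\<forall>i. r + 1 \<le> i \<and> i \<le> m \<longrightarrow> hilb F i = 3 * r)))
    \<and> (t \<noteq> 3 * r \<longrightarrow>
         hilb F 0 = 1
       \<and> (\<forall>i. 1 \<le> i \<and> i \<le> r \<longrightarrow> hilb F i = 3 * i)
       \<and> (\<forall>i. r + 1 \<le> i \<and> i + r + 1 \<le> s \<longrightarrow> hilb F i = 2 * i + r + 1)
       \<and> (t + r > 2 * s \<and> s > 2 * r \<longrightarrow> hilb F (s - r) = 2 * (s - r) + r + 1)
       \<and> (t + r > 2 * s \<and> s = 2 * r \<longrightarrow> hilb F (s - r) = 2 * (s - r) + r)
       \<and> (\<forall>i. s + 1 \<le> i + r \<and> i + s + 1 \<le> t \<longrightarrow> hilb F i = i + s + 1)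
       \<and> (\<forall>i. t \<le> i + s \<and> i \<le> m \<longrightarrow> hilb F i = t))"
      by (rule conj7[OF AB T3 TN])
  next
    assume hyp: "r = m \<and> s = d - 1 \<and> 3 * m \<le> t + 2 \<and> t \<le> 3 * m"
    have rm: "r = m" and sd: "s = 2 * m - 1" using hyp d_even by auto
    note P = H.part2[OF r_def s_def t_def rm sd]
    show "(\<forall>i. i \<le> m - 1 \<longrightarrow> hilb (act (ppow l 2) F) i = i + 1
                         \<and> hilb (act (ppow l 1) F) i = 2 * i + 1)
    \<and> hilb F 0 = 1
    \<and> (\<forall>i. 1 \<le> i \<and> i \<le> m - 1 \<longrightarrow> hilb F i = 3 * i)
    \<and> hilb F m = t" by (rule P)
  qed
qed

end
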